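(* Let $d\in\{1,2\}$, let $K$ be any simplicial complex on $[m]$, let $H_d$ be any closed subgroup of $G_d^m$ and let $L_d=G_d^m/H_d$. Then there is an $L_d$-equivariant homotopy equivalence \[ (D^d,S^{d-1})^{K}/H_d\simeq \operatorname{hocolim}_{I\in\mathrm{cat}(K)}\ G_d^m/( G_d^I\cdot H_d), \] where $L_d$ acts on $(D^d,S^{d-1})^K/H_d$ via the $G_d^m$-action, on each $G_d^m/(G_d^I\cdot H_d)$ by left translation, and the homotopy colimit is formed in the category of $L_d$-spaces (it is an $L_d$-CW-complex with cells $\Delta^s\times G_d^m/(G_d^{I_s}\cdot H_d)$ indexed by chains $I_0\supset\dots\supset I_s$ in $\mathrm{cat}(K)$).
   Context: Let $d\in\{1,2\}$; $G_1=\{\pm1\}\cong\mathbb Z/2\mathbb Z\subset\mathbb R$, $G_2=S^1\subset\mathbb C$; $D^d$ the closed unit disk in $\mathbb R$ (resp. $\mathbb C$), $S^{d-1}=\partial D^d$. $K$ is a simplicial complex on $[m]$, $\mathrm{cat}(K)$ the poset of faces of $K$ together with $\varnothing$, ordered by inclusion. $G_d^I\subseteq G_d^m$ is the coordinate subgroup with coordinates outside $I$ equal to $1$. $(D^d,S^{d-1})^I=\prod_{i\in I}D^d\times\prod_{j\notin I}S^{d-1}$ and $(D^d,S^{d-1})^K=\bigcup_{I\in K}(D^d,S^{d-1})^I\subseteq(D^d)^m$ with coordinatewise $G_d^m$-action. $G_d^I\cdot H_d$ is the subgroup generated by $G_d^I$ and $H_d$; the diagram maps are the natural projections. *)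

theory Defs
  imports "HOL-Analysis.Analysis"
begin

definition quotient_top :: "'a topology \<Rightarrow> ('a \<Rightarrow> 'b) \<Rightarrow> 'b topology" where
  "quotient_top X q = topology (\<lambda>U. U \<subseteq> q ` topspace X \<and> openin X {x \<in> topspace X. q x \<in> U})"

definition equivariant ::
  "'l set \<Rightarrow> ('l \<Rightarrow> 'a \<Rightarrow> 'a) \<Rightarrow> ('l \<Rightarrow> 'b \<Rightarrow> 'b) \<Rightarrow> 'a topology \<Rightarrow> ('a \<Rightarrow> 'b) \<Rightarrow> bool" where
  "equivariant L actX actY X f \<longleftrightarrow> (\<forall>l\<in>L. \<forall>x\<in>topspace X. f (actX l x) = actY l (f x))"

definition equivariant_homotopy_equivalent ::
  "'l set \<Rightarrow> 'a topology \<Rightarrow> ('l \<Rightarrow> 'a \<Rightarrow> 'a) \<Rightarrow> 'b topology \<Rightarrow> ('l \<Rightarrow> 'b \<Rightarrow> 'b) \<Rightarrow> bool" where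
  "equivariant_homotopy_equivalent L X actX Y actY \<longleftrightarrow>
     (\<exists>f g. continuous_map X Y f \<and> continuous_map Y X g \<and>
        equivariant L actX actY X f \<and> equivariant L actY actX Y g \<and>
        homotopic_with (equivariant L actX actX X) X X (g \<circ> f) id \<and>
        homotopic_with (equivariant L actY actY Y) Y Y (f \<circ> g) id)"

definition Disk :: "nat \<Rightarrow> complex set" where
  "Disk d = {z. cmod z \<le> 1 \<and> (d = 1 \<longrightarrow> Im z = 0)}"

definition Sph :: "nat \<Rightarrow> complex set" where
  "Sph d = {z. cmod z = 1 \<and> (d = 1 \<longrightarrow> Im z = 0)}"

text \<open>G_d = S^{d-1}: {+-1} for d = 1, S^1 for d = 2. Coordinates are indexed by [m] = {0..<m}.\<close>
definition Gm :: "nat \<Rightarrow> nat \<Rightarrow> (nat \<Rightarrow> complex) set" where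
  "Gm d m = PiE {..<m} (\<lambda>_. Sph d)"

definition gmul :: "nat \<Rightarrow> (nat \<Rightarrow> complex) \<Rightarrow> (nat \<Rightarrow> complex) \<Rightarrow> (nat \<Rightarrow> complex)" where
  "gmul m g x = (\<lambda>i\<in>{..<m}. g i * x i)"

definition gone :: "nat \<Rightarrow> nat \<Rightarrow> complex" where
  "gone m = (\<lambda>i\<in>{..<m}. 1)"

definition ginv :: "nat \<Rightarrow> (nat \<Rightarrow> complex) \<Rightarrow> (nat \<Rightarrow> complex)" where
  "ginv m g = (\<lambda>i\<in>{..<m}. inverse (g i))"

definition setmul :: "nat \<Rightarrow> (nat \<Rightarrow> complex) set \<Rightarrow> (nat \<Rightarrow> complex) set \<Rightarrow> (nat \<Rightarrow> complex) set" where
  "setmul m A B = {gmul m a b | a b. a \<in> A \<and> b \<in> B}"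

definition cube_top :: "nat \<Rightarrow> (nat \<Rightarrow> complex) topology" where
  "cube_top m = product_topology (\<lambda>_. euclidean) {..<m}"

definition is_subgroup :: "nat \<Rightarrow> nat \<Rightarrow> (nat \<Rightarrow> complex) set \<Rightarrow> bool" where
  "is_subgroup d m H \<longleftrightarrow> H \<subseteq> Gm d m \<and> gone m \<in> H \<and>
     (\<forall>g\<in>H. \<forall>h\<in>H. gmul m g h \<in> H) \<and> (\<forall>g\<in>H. ginv m g \<in> H)"

definition closed_subgroup :: "nat \<Rightarrow> nat \<Rightarrow> (nat \<Rightarrow> complex) set \<Rightarrow> bool" where
  "closed_subgroup d m H \<longleftrightarrow> is_subgroup d m H \<and> closedin (cube_top m) H"

definition GI :: "nat \<Rightarrow> nat \<Rightarrow> nat set \<Rightarrow> (nat \<Rightarrow> complex) set" where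
  "GI d m I = {g \<in> Gm d m. \<forall>j\<in>{..<m} - I. g j = 1}"

definition gen_subgroup :: "nat \<Rightarrow> nat \<Rightarrow> (nat \<Rightarrow> complex) set \<Rightarrow> (nat \<Rightarrow> complex) set \<Rightarrow> (nat \<Rightarrow> complex) set" where
  "gen_subgroup d m A B = \<Inter> {N. is_subgroup d m N \<and> A \<subseteq> N \<and> B \<subseteq> N}"

definition cosets :: "nat \<Rightarrow> nat \<Rightarrow> (nat \<Rightarrow> complex) set \<Rightarrow> (nat \<Rightarrow> complex) set set" where
  "cosets d m N = (\<lambda>g. setmul m {g} N) ` Gm d m"

definition coset_top :: "nat \<Rightarrow> nat \<Rightarrow> (nat \<Rightarrow> complex) set \<Rightarrow> (nat \<Rightarrow> complex) set topology" where
  "coset_top d m N = quotient_top (subtopology (cube_top m) (Gm d m)) (\<lambda>g. setmul m {g} N)"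

text \<open>Action of L = G/H (cosets) on sets of points: set product.\<close>
definition Lact :: "nat \<Rightarrow> (nat \<Rightarrow> complex) set \<Rightarrow> (nat \<Rightarrow> complex) set \<Rightarrow> (nat \<Rightarrow> complex) set" where
  "Lact m l C = setmul m l C"

definition simp_complex_on :: "nat \<Rightarrow> nat set set \<Rightarrow> bool" where
  "simp_complex_on m K \<longleftrightarrow> K \<subseteq> Pow {..<m} \<and> {} \<in> K \<and> (\<forall>\<sigma>\<in>K. \<forall>\<tau>. \<tau> \<subseteq> \<sigma> \<longrightarrow> \<tau> \<in> K)"

definition polyhedral_product :: "nat \<Rightarrow> nat \<Rightarrow> nat set set \<Rightarrow> (nat \<Rightarrow> complex) set" where
  "polyhedral_product d m K =
     (\<Union>I\<in>K. {x \<in> PiE {..<m} (\<lambda>_. Disk d). \<forall>j\<in>{..<m} - I. x j \<in> Sph d})"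

definition orbit_space :: "nat \<Rightarrow> nat \<Rightarrow> nat set set \<Rightarrow> (nat \<Rightarrow> complex) set \<Rightarrow> (nat \<Rightarrow> complex) set topology" where
  "orbit_space d m K H = quotient_top (subtopology (cube_top m) (polyhedral_product d m K)) (\<lambda>x. setmul m H {x})"

definition chains :: "nat set set \<Rightarrow> nat set set set" where
  "chains K = {\<sigma>. \<sigma> \<noteq> {} \<and> \<sigma> \<subseteq> K \<and> (\<forall>I\<in>\<sigma>. \<forall>J\<in>\<sigma>. I \<subseteq> J \<or> J \<subseteq> I)}"

text \<open>Geometric simplex spanned by a chain (barycentric coordinates, zero outside the chain).\<close>
definition simplex_on :: "nat set set \<Rightarrow> (nat set \<Rightarrow> real) set" where
  "simplex_on \<sigma> = {t. (\<forall>I. 0 \<le> t I) \<and> (\<forall>I. I \<notin> \<sigma> \<longrightarrow> t I = 0) \<and> sum t \<sigma> = 1}"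

definition simplex_top :: "nat set set \<Rightarrow> (nat set \<Rightarrow> real) topology" where
  "simplex_top \<sigma> = subtopology (product_topology (\<lambda>_. euclideanreal) UNIV) (simplex_on \<sigma>)"

definition NI :: "nat \<Rightarrow> nat \<Rightarrow> (nat \<Rightarrow> complex) set \<Rightarrow> nat set \<Rightarrow> (nat \<Rightarrow> complex) set" where
  "NI d m H I = gen_subgroup d m (GI d m I) H"

text \<open>Cell for a chain sigma: Delta^sigma x G/(G^{min sigma} H); min sigma = intersection.\<close>
definition hocolim_cells :: "nat \<Rightarrow> nat \<Rightarrow> nat set set \<Rightarrow> (nat \<Rightarrow> complex) set
    \<Rightarrow> (nat set set \<times> ((nat set \<Rightarrow> real) \<times> (nat \<Rightarrow> complex) set)) topology" where
  "hocolim_cells d m K H =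
     sum_topology (\<lambda>\<sigma>. prod_topology (simplex_top \<sigma>) (coset_top d m (NI d m H (\<Inter>\<sigma>)))) (chains K)"

text \<open>Face identifications: a point (t, C) of the cell of sigma is identified with
  (t, image of C in G/(G^J H)), J the minimal face of the support of t.\<close>
definition hocolim_proj :: "nat \<Rightarrow> nat \<Rightarrow> (nat \<Rightarrow> complex) set
    \<Rightarrow> nat set set \<times> ((nat set \<Rightarrow> real) \<times> (nat \<Rightarrow> complex) set)
    \<Rightarrow> (nat set \<Rightarrow> real) \<times> (nat \<Rightarrow> complex) set" where
  "hocolim_proj d m H p =
     (case p of (\<sigma>, t, C) \<Rightarrow> (t, setmul m C (NI d m H (\<Inter>{I\<in>\<sigma>. t I \<noteq> 0}))))"

definition hocolim :: "nat \<Rightarrow> nat \<Rightarrow> nat set set \<Rightarrow> (nat \<Rightarrow> complex) set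
    \<Rightarrow> ((nat set \<Rightarrow> real) \<times> (nat \<Rightarrow> complex) set) topology" where
  "hocolim d m K H = quotient_top (hocolim_cells d m K H) (hocolim_proj d m H)"

definition hocolim_act :: "nat \<Rightarrow> (nat \<Rightarrow> complex) set
    \<Rightarrow> (nat set \<Rightarrow> real) \<times> (nat \<Rightarrow> complex) set \<Rightarrow> (nat set \<Rightarrow> real) \<times> (nat \<Rightarrow> complex) set" where
  "hocolim_act m l p = (fst p, Lact m l (snd p))"

end

theory Submission
  imports Defs
begin

section \<open>Quotient topology\<close>

lemma istopology_quotient:
  "istopology (\<lambda>U. U \<subseteq> q ` topspace X \<and> openin X {x \<in> topspace X. q x \<in> U})"
proof -
  have 1: "{x \<in> topspace X. q x \<in> S \<inter> T} = {x \<in> topspace X. q x \<in> S} \<inter> {x \<in> topspace X. q x \<in> T}" for S T by auto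
  have 2: "{x \<in> topspace X. q x \<in> \<Union>KK} = (\<Union>K\<in>KK. {x \<in> topspace X. q x \<in> K})" for KK by auto
  show ?thesis unfolding istopology_def
    by (auto simp only: 1 2 intro!: openin_Int openin_Union)
qed

lemma openin_quotient_top:
  "openin (quotient_top X q) U \<longleftrightarrow> U \<subseteq> q ` topspace X \<and> openin X {x \<in> topspace X. q x \<in> U}"
  unfolding quotient_top_def by (simp add: topology_inverse'[OF istopology_quotient])

lemma topspace_quotient_top [simp]: "topspace (quotient_top X q) = q ` topspace X"
proof -
  have "{x \<in> topspace X. q x \<in> q ` topspace X} = topspace X" by auto
  then have "openin (quotient_top X q) (q ` topspace X)"
    by (auto simp: openin_quotient_top)
  moreover have "U \<subseteq> q ` topspace X" if "openin (quotient_top X q) U" for U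
    using that by (simp add: openin_quotient_top)
  ultimately show ?thesis
    by (metis openin_subset subset_antisym openin_topspace)
qed

lemma quotient_map_quotient_top: "quotient_map X (quotient_top X q) q"
  unfolding quotient_map_def by (auto simp: openin_quotient_top)

lemma continuous_map_quotient_top: "continuous_map X (quotient_top X q) q"
  using quotient_map_quotient_top quotient_imp_continuous_map by blast

lemma continuous_map_from_quotient_top:
  assumes "continuous_map X Y (f \<circ> q)"
  shows "continuous_map (quotient_top X q) Y f"
  using continuous_compose_quotient_map[OF quotient_map_quotient_top assms] .

lemma continuous_map_from_sum_topology:
  assumes "\<And>i. i \<in> I \<Longrightarrow> continuous_map (X i) Y (\<lambda>x. f (i, x))"
  shows "continuous_map (sum_topology X I) Y f"
  unfolding continuous_map_def
proof (intro conjI allI impI)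
  show "f \<in> topspace (sum_topology X I) \<rightarrow> topspace Y"
    using assms by (auto simp: continuous_map_def Pi_iff)
next
  fix U assume U: "openin Y U"
  show "openin (sum_topology X I) {x \<in> topspace (sum_topology X I). f x \<in> U}"
    unfolding openin_sum_topology
  proof (intro conjI ballI)
    fix i assume i: "i \<in> I"
    have "{x. (i, x) \<in> {x \<in> topspace (sum_topology X I). f x \<in> U}} = {x \<in> topspace (X i). f (i, x) \<in> U}"
      using i by auto
    then show "openin (X i) {x. (i, x) \<in> {x \<in> topspace (sum_topology X I). f x \<in> U}}"
      using assms[OF i] U by (simp add: continuous_map_def)
  qed auto
qed

lemma compact_space_sum_topology:
  assumes "finite I" "\<And>i. i \<in> I \<Longrightarrow> compact_space (X i)"
  shows "compact_space (sum_topology X I)"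
proof -
  have "topspace (sum_topology X I) = (\<Union>i\<in>I. (\<lambda>x. (i,x)) ` topspace (X i))" by auto
  moreover have "compactin (sum_topology X I) ((\<lambda>x. (i,x)) ` topspace (X i))" if "i \<in> I" for i
    using image_compactin[of "X i" "topspace (X i)" "sum_topology X I" "\<lambda>x. (i,x)"]
      continuous_map_component_injection[of i I X, OF that] assms(2)[OF that]
    by (simp add: compact_space_def)
  ultimately show ?thesis
    unfolding compact_space_def using assms(1) by (auto intro!: compactin_Union)
qed

section \<open>Group algebra\<close>

lemma gmul_apply: "gmul m a b i = (if i < m then a i * b i else undefined)"
  by (simp add: gmul_def)

lemma gmul_ext [simp]: "gmul m a b \<in> extensional {..<m}"
  by (simp add: gmul_def)

lemma gmul_assoc: "gmul m (gmul m a b) c = gmul m a (gmul m b c)"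
  by (auto simp: fun_eq_iff gmul_apply mult.assoc)

lemma gmul_comm: "gmul m a b = gmul m b a"
  by (auto simp: fun_eq_iff gmul_apply mult.commute)

lemma gmul_left_commute: "gmul m a (gmul m b c) = gmul m b (gmul m a c)"
  by (auto simp: fun_eq_iff gmul_apply mult.left_commute)

lemma gmul_one: "x \<in> extensional {..<m} \<Longrightarrow> gmul m (gone m) x = x"
  by (auto simp: fun_eq_iff gmul_apply gone_def extensional_def)

lemma gmul_one_right: "x \<in> extensional {..<m} \<Longrightarrow> gmul m x (gone m) = x"
  using gmul_one gmul_comm by metis

lemma Sph_mult: "a \<in> Sph d \<Longrightarrow> b \<in> Sph d \<Longrightarrow> a * b \<in> Sph d"
  by (auto simp: Sph_def norm_mult)

lemma Sph_inverse: "a \<in> Sph d \<Longrightarrow> inverse a \<in> Sph d"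
  by (auto simp: Sph_def norm_inverse)

lemma Sph_nz: "a \<in> Sph d \<Longrightarrow> a \<noteq> 0"
  by (auto simp: Sph_def)

lemma Sph_one [simp]: "1 \<in> Sph d"
  by (auto simp: Sph_def)

lemma Sph_sub_Disk: "Sph d \<subseteq> Disk d"
  by (auto simp: Sph_def Disk_def)

lemma Gm_ext: "g \<in> Gm d m \<Longrightarrow> g \<in> extensional {..<m}"
  by (auto simp: Gm_def PiE_def)

lemma Gm_mem: "g \<in> Gm d m \<Longrightarrow> i < m \<Longrightarrow> g i \<in> Sph d"
  by (auto simp: Gm_def PiE_def)

lemma Gm_iff: "g \<in> Gm d m \<longleftrightarrow> g \<in> extensional {..<m} \<and> (\<forall>i<m. g i \<in> Sph d)"
  by (auto simp: Gm_def PiE_def Pi_def)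

lemma gmul_Gm: "a \<in> Gm d m \<Longrightarrow> b \<in> Gm d m \<Longrightarrow> gmul m a b \<in> Gm d m"
  by (auto simp: Gm_iff gmul_apply intro: Sph_mult)

lemma gone_Gm [simp]: "gone m \<in> Gm d m"
  by (auto simp: Gm_iff gone_def)

lemma ginv_Gm: "a \<in> Gm d m \<Longrightarrow> ginv m a \<in> Gm d m"
  by (auto simp: Gm_iff ginv_def intro: Sph_inverse)

lemma ginv_gmul: "a \<in> Gm d m \<Longrightarrow> gmul m (ginv m a) a = gone m"
  by (auto simp: fun_eq_iff gmul_apply ginv_def gone_def Gm_iff Sph_nz)

lemma gmul_ginv: "a \<in> Gm d m \<Longrightarrow> gmul m a (ginv m a) = gone m"
  using ginv_gmul gmul_comm by metis

lemma gmul_cancel_left: "a \<in> Gm d m \<Longrightarrow> x \<in> extensional {..<m} \<Longrightarrow> gmul m (ginv m a) (gmul m a x) = x"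
  by (metis ginv_gmul gmul_assoc gmul_one)

lemma subgroupD:
  assumes "is_subgroup d m N"
  shows "N \<subseteq> Gm d m" "gone m \<in> N" "g \<in> N \<Longrightarrow> h \<in> N \<Longrightarrow> gmul m g h \<in> N" "g \<in> N \<Longrightarrow> ginv m g \<in> N"
  using assms by (auto simp: is_subgroup_def)

lemma setmul_iff: "z \<in> setmul m A B \<longleftrightarrow> (\<exists>a\<in>A. \<exists>b\<in>B. z = gmul m a b)"
  by (auto simp: setmul_def)

lemma setmulI: "a \<in> A \<Longrightarrow> b \<in> B \<Longrightarrow> gmul m a b \<in> setmul m A B"
  by (auto simp: setmul_def)

lemma setmulI': "a \<in> A \<Longrightarrow> b \<in> B \<Longrightarrow> z = gmul m a b \<Longrightarrow> z \<in> setmul m A B"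
  by (auto simp: setmul_def)

lemma setmulE: "z \<in> setmul m A B \<Longrightarrow> (\<And>a b. a \<in> A \<Longrightarrow> b \<in> B \<Longrightarrow> z = gmul m a b \<Longrightarrow> P) \<Longrightarrow> P"
  by (auto simp: setmul_def)

lemma setmul_singletonE: "z \<in> setmul m {c} B \<Longrightarrow> (\<And>b. b \<in> B \<Longrightarrow> z = gmul m c b \<Longrightarrow> P) \<Longrightarrow> P"
  by (auto simp: setmul_def)

lemma setmul_singleton2E: "z \<in> setmul m A {c} \<Longrightarrow> (\<And>a. a \<in> A \<Longrightarrow> z = gmul m a c \<Longrightarrow> P) \<Longrightarrow> P"
  by (auto simp: setmul_def)

lemma setmul_singletonI: "b \<in> B \<Longrightarrow> z = gmul m c b \<Longrightarrow> z \<in> setmul m {c} B"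
  by (auto simp: setmul_def)

lemma setmul_singleton2I: "a \<in> A \<Longrightarrow> z = gmul m a c \<Longrightarrow> z \<in> setmul m A {c}"
  by (auto simp: setmul_def)

lemma setmul_mono: "A \<subseteq> A' \<Longrightarrow> B \<subseteq> B' \<Longrightarrow> setmul m A B \<subseteq> setmul m A' B'"
  by (auto simp: setmul_def)

lemma setmul_singleton: "z \<in> setmul m {c} B \<longleftrightarrow> (\<exists>b\<in>B. z = gmul m c b)"
  by (auto simp: setmul_def)

lemma setmul_singleton2: "z \<in> setmul m A {c} \<longleftrightarrow> (\<exists>a\<in>A. z = gmul m a c)"
  by (auto simp: setmul_def)

lemma gone_ext [simp]: "gone m \<in> extensional {..<m}"
  by (simp add: gone_def)

lemma setmul_subgroup:
  assumes A: "is_subgroup d m A" and B: "is_subgroup d m B"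
  shows "is_subgroup d m (setmul m A B)"
  unfolding is_subgroup_def
proof (intro conjI ballI)
  show "setmul m A B \<subseteq> Gm d m"
  proof
    fix z assume "z \<in> setmul m A B"
    then obtain a b where "a \<in> A" "b \<in> B" "z = gmul m a b" by (auto simp: setmul_iff)
    then show "z \<in> Gm d m" using subgroupD(1)[OF A] subgroupD(1)[OF B] gmul_Gm by blast
  qed
  have "gone m = gmul m (gone m) (gone m)" by (simp add: gmul_one)
  then show "gone m \<in> setmul m A B"
    using subgroupD(2)[OF A] subgroupD(2)[OF B] unfolding setmul_iff by blast
  fix g h assume g: "g \<in> setmul m A B" and h: "h \<in> setmul m A B"
  then obtain a1 b1 a2 b2 where ab: "a1 \<in> A" "b1 \<in> B" "a2 \<in> A" "b2 \<in> B"
    "g = gmul m a1 b1" "h = gmul m a2 b2" unfolding setmul_iff by blast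
  have "gmul m g h = gmul m (gmul m a1 a2) (gmul m b1 b2)"
    using ab by (auto simp: fun_eq_iff gmul_apply ac_simps)
  then show "gmul m g h \<in> setmul m A B"
    using ab subgroupD(3)[OF A] subgroupD(3)[OF B] unfolding setmul_iff by blast
next
  fix g assume g: "g \<in> setmul m A B"
  then obtain a b where ab: "a \<in> A" "b \<in> B" "g = gmul m a b" unfolding setmul_iff by blast
  have "ginv m g = gmul m (ginv m a) (ginv m b)"
    using ab by (auto simp: fun_eq_iff gmul_apply ginv_def)
  then show "ginv m g \<in> setmul m A B"
    using ab subgroupD(4)[OF A] subgroupD(4)[OF B] unfolding setmul_iff by blast
qed

lemma subgroup_sub_setmul_left:
  assumes "is_subgroup d m A" "is_subgroup d m B" shows "A \<subseteq> setmul m A B"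
proof
  fix a assume "a \<in> A"
  then have "a = gmul m a (gone m)" using subgroupD(1)[OF assms(1)] by (metis Gm_ext gmul_one_right subsetD)
  then show "a \<in> setmul m A B" using \<open>a \<in> A\<close> subgroupD(2)[OF assms(2)] unfolding setmul_iff by blast
qed

lemma subgroup_sub_setmul_right:
  assumes "is_subgroup d m A" "is_subgroup d m B" shows "B \<subseteq> setmul m A B"
proof
  fix a assume "a \<in> B"
  then have "a = gmul m (gone m) a" using subgroupD(1)[OF assms(2)] by (metis Gm_ext gmul_one subsetD)
  then show "a \<in> setmul m A B" using \<open>a \<in> B\<close> subgroupD(2)[OF assms(1)] unfolding setmul_iff by blast
qed

lemma gen_subgroup_eq:
  assumes A: "is_subgroup d m A" and B: "is_subgroup d m B"
  shows "gen_subgroup d m A B = setmul m A B"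
proof
  show "gen_subgroup d m A B \<subseteq> setmul m A B"
    unfolding gen_subgroup_def
    by (rule Inter_lower) (simp add: setmul_subgroup[OF A B] subgroup_sub_setmul_left[OF A B]
      subgroup_sub_setmul_right[OF A B])
  show "setmul m A B \<subseteq> gen_subgroup d m A B"
    unfolding gen_subgroup_def
  proof (rule Inter_greatest)
    fix N assume "N \<in> {N. is_subgroup d m N \<and> A \<subseteq> N \<and> B \<subseteq> N}"
    then have N: "is_subgroup d m N" "A \<subseteq> N" "B \<subseteq> N" by auto
    show "setmul m A B \<subseteq> N"
    proof
      fix z assume "z \<in> setmul m A B"
      then obtain a b where "a \<in> A" "b \<in> B" "z = gmul m a b" unfolding setmul_iff by blast
      then show "z \<in> N" using N subgroupD(3)[OF N(1)] by blast
    qed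
  qed
qed

lemma GI_iff: "g \<in> GI d m I \<longleftrightarrow> g \<in> Gm d m \<and> (\<forall>j. j < m \<longrightarrow> j \<notin> I \<longrightarrow> g j = 1)"
  by (auto simp: GI_def)

lemma GI_subgroup: "is_subgroup d m (GI d m I)"
  unfolding is_subgroup_def
proof (intro conjI ballI)
  show "GI d m I \<subseteq> Gm d m" by (auto simp: GI_iff)
  show "gone m \<in> GI d m I" using gone_Gm[of m d] by (simp add: GI_iff gone_def)
  fix g h assume g: "g \<in> GI d m I" and h: "h \<in> GI d m I"
  have "gmul m g h \<in> Gm d m" using g h by (simp add: GI_iff gmul_Gm)
  moreover have "gmul m g h j = 1" if "j < m" "j \<notin> I" for j
    using g h that by (simp add: GI_iff gmul_apply)
  ultimately show "gmul m g h \<in> GI d m I" by (simp add: GI_iff)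
next
  fix g assume g: "g \<in> GI d m I"
  have "ginv m g \<in> Gm d m" using g by (simp add: GI_iff ginv_Gm)
  moreover have "ginv m g j = 1" if "j < m" "j \<notin> I" for j
    using g that by (simp add: GI_iff ginv_def)
  ultimately show "ginv m g \<in> GI d m I" by (simp add: GI_iff)
qed

lemma NI_eq: "is_subgroup d m H \<Longrightarrow> NI d m H I = setmul m (GI d m I) H"
  by (simp add: NI_def gen_subgroup_eq GI_subgroup)

lemma NI_subgroup: "is_subgroup d m H \<Longrightarrow> is_subgroup d m (NI d m H I)"
  by (simp add: NI_eq GI_subgroup setmul_subgroup)

lemma H_sub_NI: "is_subgroup d m H \<Longrightarrow> H \<subseteq> NI d m H I"
  using subgroup_sub_setmul_right[OF GI_subgroup] by (simp add: NI_eq)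

lemma NI_mono: "is_subgroup d m H \<Longrightarrow> I \<subseteq> I' \<Longrightarrow> NI d m H I \<subseteq> NI d m H I'"
proof -
  assume H: "is_subgroup d m H" and II: "I \<subseteq> I'"
  have "GI d m I \<subseteq> GI d m I'"
  proof
    fix g assume "g \<in> GI d m I" then show "g \<in> GI d m I'" using II unfolding GI_iff by blast
  qed
  then show ?thesis unfolding NI_eq[OF H] by (rule setmul_mono) simp
qed

lemma coset_sub_Gm: "is_subgroup d m N \<Longrightarrow> c \<in> Gm d m \<Longrightarrow> setmul m {c} N \<subseteq> Gm d m"
proof
  fix z assume N: "is_subgroup d m N" and c: "c \<in> Gm d m" and z: "z \<in> setmul m {c} N"
  from z obtain n where "n \<in> N" "z = gmul m c n" by (rule setmul_singletonE)
  then show "z \<in> Gm d m" using gmul_Gm[OF c] subgroupD(1)[OF N] by blast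
qed

lemma coset_self: "is_subgroup d m N \<Longrightarrow> c \<in> Gm d m \<Longrightarrow> c \<in> setmul m {c} N"
  by (metis subgroupD(2) gmul_one_right Gm_ext setmul_singleton)

lemma coset_eq:
  assumes N: "is_subgroup d m N" and c: "c \<in> Gm d m" and n: "n \<in> N"
  shows "setmul m {gmul m c n} N = setmul m {c} N"
proof
  show "setmul m {gmul m c n} N \<subseteq> setmul m {c} N"
  proof
    fix z assume "z \<in> setmul m {gmul m c n} N"
    then obtain n' where n': "n' \<in> N" "z = gmul m (gmul m c n) n'" by (auto simp: setmul_singleton)
    then have "z = gmul m c (gmul m n n')" by (simp add: gmul_assoc)
    moreover have "gmul m n n' \<in> N" using n n' subgroupD(3)[OF N] by auto
    ultimately show "z \<in> setmul m {c} N" by (metis setmul_singletonI)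
  qed
  show "setmul m {c} N \<subseteq> setmul m {gmul m c n} N"
  proof
    fix z assume "z \<in> setmul m {c} N"
    then obtain n' where n': "n' \<in> N" "z = gmul m c n'" by (auto simp: setmul_singleton)
    have nG: "n \<in> Gm d m" "n' \<in> Gm d m" using n n' subgroupD(1)[OF N] by auto
    have "gmul m (gmul m c n) (gmul m (ginv m n) n') = gmul m c (gmul m n (gmul m (ginv m n) n'))"
      by (simp add: gmul_assoc)
    also have "\<dots> = gmul m c n'" using gmul_cancel_left[OF nG(1) Gm_ext[OF nG(2)]]
      by (simp add: gmul_left_commute[of m n])
    also have "\<dots> = z" using n' by simp
    finally have "z = gmul m (gmul m c n) (gmul m (ginv m n) n')" by simp
    moreover have "gmul m (ginv m n) n' \<in> N" using n n' subgroupD(3,4)[OF N] by auto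
    ultimately show "z \<in> setmul m {gmul m c n} N" by (metis setmul_singletonI)
  qed
qed

lemma coset_eq_mem:
  assumes N: "is_subgroup d m N" and c: "c \<in> Gm d m" and c': "c' \<in> setmul m {c} N"
  shows "setmul m {c'} N = setmul m {c} N"
proof -
  obtain n where "n \<in> N" "c' = gmul m c n" using c' by (rule setmul_singletonE)
  then show ?thesis using coset_eq[OF N c] by simp
qed

lemma coset_eq_iff:
  assumes N: "is_subgroup d m N" and c: "c \<in> Gm d m" and c': "c' \<in> Gm d m"
  shows "setmul m {c'} N = setmul m {c} N \<longleftrightarrow> c' \<in> setmul m {c} N"
proof
  assume "setmul m {c'} N = setmul m {c} N"
  then show "c' \<in> setmul m {c} N" using coset_self[OF N c'] by simp
qed (rule coset_eq_mem[OF N c])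

lemma coset_setmul:
  assumes N1: "is_subgroup d m N1" and N2: "is_subgroup d m N2" and sub: "N1 \<subseteq> N2" and c: "c \<in> Gm d m"
  shows "setmul m (setmul m {c} N1) N2 = setmul m {c} N2"
proof
  show "setmul m (setmul m {c} N1) N2 \<subseteq> setmul m {c} N2"
  proof
    fix z assume "z \<in> setmul m (setmul m {c} N1) N2"
    then obtain u n2 where "u \<in> setmul m {c} N1" "n2 \<in> N2" "z = gmul m u n2"
      by (rule setmulE)
    then obtain n1 where n: "n1 \<in> N1" "n2 \<in> N2" "z = gmul m (gmul m c n1) n2"
      by (auto elim!: setmul_singletonE)
    then have "z = gmul m c (gmul m n1 n2)" by (simp add: gmul_assoc)
    moreover have "gmul m n1 n2 \<in> N2" using n sub subgroupD(3)[OF N2] by auto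
    ultimately show "z \<in> setmul m {c} N2" by (metis setmul_singletonI)
  qed
  show "setmul m {c} N2 \<subseteq> setmul m (setmul m {c} N1) N2"
  proof
    fix z assume "z \<in> setmul m {c} N2"
    then obtain n where n: "n \<in> N2" "z = gmul m c n" by (rule setmul_singletonE)
    show "z \<in> setmul m (setmul m {c} N1) N2" by (rule setmulI'[OF coset_self[OF N1 c] n])
  qed
qed

lemma coset_act:
  assumes H: "is_subgroup d m H" and N: "is_subgroup d m N" and sub: "H \<subseteq> N"
    and a: "a \<in> Gm d m" and c: "c \<in> Gm d m"
  shows "setmul m (setmul m {a} H) (setmul m {c} N) = setmul m {gmul m a c} N"
proof
  show "setmul m (setmul m {a} H) (setmul m {c} N) \<subseteq> setmul m {gmul m a c} N"
  proof
    fix z assume "z \<in> setmul m (setmul m {a} H) (setmul m {c} N)"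
    then obtain u v where "u \<in> setmul m {a} H" "v \<in> setmul m {c} N" "z = gmul m u v"
      by (rule setmulE)
    then obtain h n where hn: "h \<in> H" "n \<in> N" "z = gmul m (gmul m a h) (gmul m c n)"
      by (auto elim!: setmul_singletonE)
    then have "z = gmul m (gmul m a c) (gmul m h n)" by (auto simp: fun_eq_iff gmul_apply ac_simps)
    moreover have "gmul m h n \<in> N" using hn sub subgroupD(3)[OF N] by auto
    ultimately show "z \<in> setmul m {gmul m a c} N" by (metis setmul_singletonI)
  qed
  show "setmul m {gmul m a c} N \<subseteq> setmul m (setmul m {a} H) (setmul m {c} N)"
  proof
    fix z assume "z \<in> setmul m {gmul m a c} N"
    then obtain n where n: "n \<in> N" "z = gmul m (gmul m a c) n" by (rule setmul_singletonE)
    then have "z = gmul m a (gmul m c n)" by (simp add: gmul_assoc)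
    moreover have "gmul m c n \<in> setmul m {c} N" using n by (simp add: setmulI)
    ultimately show "z \<in> setmul m (setmul m {a} H) (setmul m {c} N)"
      using setmulI'[OF coset_self[OF H a]] by simp
  qed
qed

lemma orbit_self: "is_subgroup d m H \<Longrightarrow> x \<in> extensional {..<m} \<Longrightarrow> x \<in> setmul m H {x}"
proof -
  assume H: "is_subgroup d m H" and x: "x \<in> extensional {..<m}"
  have "x = gmul m (gone m) x" using gmul_one[OF x] by simp
  then show ?thesis by (rule setmul_singleton2I[OF subgroupD(2)[OF H]])
qed

lemma orbit_eq_iff:
  assumes H: "is_subgroup d m H" and x: "x \<in> extensional {..<m}" and y: "y \<in> extensional {..<m}"
  shows "setmul m H {y} = setmul m H {x} \<longleftrightarrow> (\<exists>h\<in>H. y = gmul m h x)"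
proof
  assume "setmul m H {y} = setmul m H {x}"
  then have "y \<in> setmul m H {x}" using orbit_self[OF H y] by simp
  then show "\<exists>h\<in>H. y = gmul m h x" by (auto elim: setmul_singleton2E)
next
  assume "\<exists>h\<in>H. y = gmul m h x"
  then obtain h where h: "h \<in> H" "y = gmul m h x" by auto
  have hG: "h \<in> Gm d m" using h subgroupD(1)[OF H] by auto
  show "setmul m H {y} = setmul m H {x}"
  proof
    show "setmul m H {y} \<subseteq> setmul m H {x}"
    proof
      fix z assume "z \<in> setmul m H {y}"
      then obtain h' where h': "h' \<in> H" "z = gmul m h' y" by (rule setmul_singleton2E)
      then have "z = gmul m (gmul m h' h) x" using h by (simp add: gmul_assoc)
      moreover have "gmul m h' h \<in> H" using h h' subgroupD(3)[OF H] by auto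
      ultimately show "z \<in> setmul m H {x}" by (metis setmul_singleton2I)
    qed
    show "setmul m H {x} \<subseteq> setmul m H {y}"
    proof
      fix z assume "z \<in> setmul m H {x}"
      then obtain h' where h': "h' \<in> H" "z = gmul m h' x" by (rule setmul_singleton2E)
      have "gmul m (gmul m h' (ginv m h)) y = gmul m h' (gmul m (ginv m h) (gmul m h x))"
        using h by (simp add: gmul_assoc)
      also have "\<dots> = z" using h' by (simp add: gmul_cancel_left[OF hG x])
      finally have "z = gmul m (gmul m h' (ginv m h)) y" by simp
      moreover have "gmul m h' (ginv m h) \<in> H" using h h' subgroupD(3,4)[OF H] by auto
      ultimately show "z \<in> setmul m H {y}" by (metis setmul_singleton2I)
    qed
  qed
qed

lemma orbit_act:
  assumes H: "is_subgroup d m H" and a: "a \<in> Gm d m" and x: "x \<in> extensional {..<m}"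
  shows "setmul m (setmul m {a} H) (setmul m H {x}) = setmul m H {gmul m a x}"
proof
  show "setmul m (setmul m {a} H) (setmul m H {x}) \<subseteq> setmul m H {gmul m a x}"
  proof
    fix z assume "z \<in> setmul m (setmul m {a} H) (setmul m H {x})"
    then obtain u v where "u \<in> setmul m {a} H" "v \<in> setmul m H {x}" "z = gmul m u v"
      by (rule setmulE)
    then obtain h h' where hh: "h \<in> H" "h' \<in> H" "z = gmul m (gmul m a h) (gmul m h' x)"
      by (auto elim!: setmul_singletonE setmul_singleton2E)
    then have "z = gmul m (gmul m h h') (gmul m a x)" by (auto simp: fun_eq_iff gmul_apply ac_simps)
    moreover have "gmul m h h' \<in> H" using hh subgroupD(3)[OF H] by auto
    ultimately show "z \<in> setmul m H {gmul m a x}" by (metis setmul_singleton2I)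
  qed
  show "setmul m H {gmul m a x} \<subseteq> setmul m (setmul m {a} H) (setmul m H {x})"
  proof
    fix z assume "z \<in> setmul m H {gmul m a x}"
    then obtain h where h: "h \<in> H" "z = gmul m h (gmul m a x)" by (rule setmul_singleton2E)
    then have "z = gmul m (gmul m a h) x" by (auto simp: fun_eq_iff gmul_apply ac_simps)
    moreover have "gmul m a h \<in> setmul m {a} H" using h by (simp add: setmulI)
    ultimately show "z \<in> setmul m (setmul m {a} H) (setmul m H {x})"
      using setmulI'[OF _ orbit_self[OF H x]] by simp
  qed
qed

section \<open>Chains and simplices\<close>

definition is_chain :: "nat set set \<Rightarrow> bool" where
  "is_chain S \<longleftrightarrow> (\<forall>I\<in>S. \<forall>J\<in>S. I \<subseteq> J \<or> J \<subseteq> I)"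

lemma is_chain_subset: "is_chain S \<Longrightarrow> T \<subseteq> S \<Longrightarrow> is_chain T"
  by (auto simp: is_chain_def)

lemma chain_Inter_mem:
  assumes "finite S" "S \<noteq> {}" "is_chain S"
  shows "\<Inter>S \<in> S"
  using assms
proof (induction S rule: finite_ne_induct)
  case (singleton x) then show ?case by simp
next
  case (insert x F)
  then have IF: "\<Inter>F \<in> F" using is_chain_subset by blast
  have "x \<subseteq> \<Inter>F \<or> \<Inter>F \<subseteq> x" using insert.prems IF by (auto simp: is_chain_def)
  then show ?case using IF by (auto simp: Int_absorb1 Int_absorb2 simp del: Inter_iff)
qed

lemma chain_Union_mem:
  assumes "finite S" "S \<noteq> {}" "is_chain S"
  shows "\<Union>S \<in> S"
  using assms
proof (induction S rule: finite_ne_induct)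
  case (singleton x) then show ?case by simp
next
  case (insert x F)
  then have IF: "\<Union>F \<in> F" using is_chain_subset by blast
  have "x \<subseteq> \<Union>F \<or> \<Union>F \<subseteq> x" using insert.prems IF by (auto simp: is_chain_def)
  then show ?case using IF by (auto simp: Un_absorb1 Un_absorb2 simp del: Union_iff)
qed

definition rr :: "nat \<Rightarrow> (nat set \<Rightarrow> real) \<Rightarrow> nat \<Rightarrow> real" where
  "rr m t i = (\<Sum>J\<in>{J. J \<subseteq> {..<m} \<and> i \<notin> J}. t J)"

lemma finite_subsets_m: "finite {J. J \<subseteq> {..<(m::nat)} \<and> P J}"
  by (rule finite_subset[of _ "Pow {..<m}"]) auto

locale simp_data =
  fixes m :: nat and \<sigma> :: "nat set set" and t :: "nat set \<Rightarrow> real"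
  assumes chain: "is_chain \<sigma>" and sub: "\<sigma> \<subseteq> Pow {..<m}" and ne: "\<sigma> \<noteq> {}"
    and tin: "t \<in> simplex_on \<sigma>"
begin

lemma fin: "finite \<sigma>"
  using sub by (rule finite_subset) simp

lemma t_nonneg: "0 \<le> t I"
  using tin by (simp add: simplex_on_def)

lemma t_zero: "I \<notin> \<sigma> \<Longrightarrow> t I = 0"
  using tin by (simp add: simplex_on_def)

lemma t_sum: "sum t \<sigma> = 1"
  using tin by (simp add: simplex_on_def)

lemma sum_sub_le: "S \<subseteq> \<sigma> \<Longrightarrow> sum t S \<le> 1"
  using sum_mono2[OF fin, of S t] t_nonneg t_sum by simp

lemma sum_mono_sub: "S \<subseteq> S' \<Longrightarrow> S' \<subseteq> \<sigma> \<Longrightarrow> sum t S \<le> sum t S'"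
proof -
  assume a: "S \<subseteq> S'" "S' \<subseteq> \<sigma>"
  have "finite S'" using a(2) fin finite_subset by blast
  then show ?thesis using a(1) by (rule sum_mono2) (simp add: t_nonneg)
qed

lemma rr_eq: "rr m t i = sum t {J\<in>\<sigma>. i \<notin> J}"
proof -
  have "sum t {J\<in>\<sigma>. i \<notin> J} = sum t {J. J \<subseteq> {..<m} \<and> i \<notin> J}"
  proof (rule sum.mono_neutral_left)
    show "finite {J. J \<subseteq> {..<m} \<and> i \<notin> J}" by (rule finite_subsets_m)
    show "{J \<in> \<sigma>. i \<notin> J} \<subseteq> {J. J \<subseteq> {..<m} \<and> i \<notin> J}" using sub by auto
    show "\<forall>J\<in>{J. J \<subseteq> {..<m} \<and> i \<notin> J} - {J \<in> \<sigma>. i \<notin> J}. t J = 0" using t_zero by auto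
  qed
  then show ?thesis by (simp add: rr_def)
qed

lemma rr_nonneg: "0 \<le> rr m t i"
  unfolding rr_eq by (rule sum_nonneg) (simp add: t_nonneg)

lemma rr_le1: "rr m t i \<le> 1"
  unfolding rr_eq by (rule sum_sub_le) auto

lemma rr_one: "i \<notin> \<Union>\<sigma> \<Longrightarrow> rr m t i = 1"
proof -
  assume "i \<notin> \<Union>\<sigma>"
  then have "{J\<in>\<sigma>. i \<notin> J} = \<sigma>" by auto
  then show ?thesis using t_sum by (simp add: rr_eq)
qed

definition supp where "supp = {I\<in>\<sigma>. t I \<noteq> 0}"

lemma supp_ne: "supp \<noteq> {}"
proof
  assume "supp = {}"
  then have "\<forall>I\<in>\<sigma>. t I = 0" by (auto simp: supp_def)
  then have "sum t \<sigma> = 0" by simp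
  then show False using t_sum by simp
qed

lemma supp_sub: "supp \<subseteq> \<sigma>" by (auto simp: supp_def)

lemma Inter_le_supp: "\<Inter>\<sigma> \<subseteq> \<Inter>supp"
  using supp_sub by auto

lemma rr_zero_iff: "rr m t i = 0 \<longleftrightarrow> i \<in> \<Inter>supp"
proof -
  have "rr m t i = 0 \<longleftrightarrow> (\<forall>J\<in>{J\<in>\<sigma>. i \<notin> J}. t J = 0)"
    unfolding rr_eq by (rule sum_nonneg_eq_0_iff) (use fin t_nonneg in auto)
  also have "\<dots> \<longleftrightarrow> i \<in> \<Inter>supp" by (auto simp: supp_def)
  finally show ?thesis .
qed

lemma Inter_supp_sub: "\<Inter>supp \<subseteq> {..<m}"
  using supp_ne supp_sub sub by blast

definition AA where "AA J = sum t {J'\<in>\<sigma>. J' \<subseteq> J}"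
definition BB where "BB J = sum t {J'\<in>\<sigma>. J' \<subset> J}"

lemma AA_le1: "AA J \<le> 1" unfolding AA_def by (rule sum_sub_le) auto
lemma BB_nonneg: "0 \<le> BB J" unfolding BB_def by (rule sum_nonneg) (simp add: t_nonneg)

lemma AA_BB: "AA J = BB J + (if J \<in> \<sigma> then t J else 0)"
proof (cases "J \<in> \<sigma>")
  case True
  then have "{J'\<in>\<sigma>. J' \<subseteq> J} = insert J {J'\<in>\<sigma>. J' \<subset> J}" by auto
  then show ?thesis using True fin by (simp add: AA_def BB_def)
next
  case False
  then have "{J'\<in>\<sigma>. J' \<subseteq> J} = {J'\<in>\<sigma>. J' \<subset> J}" by auto
  then show ?thesis using False by (simp add: AA_def BB_def)
qed

lemma rr_ge_AA: "i \<notin> J \<Longrightarrow> AA J \<le> rr m t i"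
  unfolding AA_def rr_eq by (rule sum_mono_sub) auto

lemma rr_le_AA_witness:
  "AA J = 1 \<or> (\<exists>i. i < m \<and> i \<notin> J \<and> rr m t i \<le> AA J)"
proof (cases "{J'\<in>\<sigma>. \<not> J' \<subseteq> J} = {}")
  case True
  then have "{J'\<in>\<sigma>. J' \<subseteq> J} = \<sigma>" by auto
  then show ?thesis using t_sum by (simp add: AA_def)
next
  case False
  let ?S = "{J'\<in>\<sigma>. \<not> J' \<subseteq> J}"
  have M: "\<Inter>?S \<in> ?S"
    by (rule chain_Inter_mem) (use False fin chain in \<open>auto intro: is_chain_subset\<close>)
  define M where "M = \<Inter>?S"
  have M1: "M \<in> \<sigma>" "\<not> M \<subseteq> J" using M unfolding M_def by auto
  have M2: "\<And>J'. J' \<in> \<sigma> \<Longrightarrow> \<not> J' \<subseteq> J \<Longrightarrow> M \<subseteq> J'" unfolding M_def by blast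
  obtain i where i: "i \<in> M" "i \<notin> J" using M1 by blast
  have "i < m" using M1 i sub by blast
  have "{J'\<in>\<sigma>. i \<notin> J'} \<subseteq> {J'\<in>\<sigma>. J' \<subseteq> J}"
  proof
    fix J' assume "J' \<in> {J'\<in>\<sigma>. i \<notin> J'}"
    then show "J' \<in> {J'\<in>\<sigma>. J' \<subseteq> J}" using M2[of J'] i by blast
  qed
  then have "rr m t i \<le> AA J" unfolding AA_def rr_eq by (rule sum_mono_sub) auto
  then show ?thesis using i \<open>i < m\<close> by blast
qed

lemma rr_le_BB: "J \<in> \<sigma> \<Longrightarrow> i \<in> J \<Longrightarrow> rr m t i \<le> BB J"
proof -
  assume J: "J \<in> \<sigma>" and i: "i \<in> J"
  have "{J'\<in>\<sigma>. i \<notin> J'} \<subseteq> {J'\<in>\<sigma>. J' \<subset> J}"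
  proof
    fix J' assume "J' \<in> {J'\<in>\<sigma>. i \<notin> J'}"
    then have "J' \<in> \<sigma>" "i \<notin> J'" by auto
    then have "J' \<subseteq> J \<or> J \<subseteq> J'" using J chain by (auto simp: is_chain_def)
    then show "J' \<in> {J'\<in>\<sigma>. J' \<subset> J}" using \<open>J' \<in> \<sigma>\<close> \<open>i \<notin> J'\<close> i by auto
  qed
  then show ?thesis unfolding BB_def rr_eq by (rule sum_mono_sub) auto
qed

lemma rr_ge_BB_witness: "BB J = 0 \<or> (\<exists>i\<in>J. BB J \<le> rr m t i)"
proof (cases "{J'\<in>\<sigma>. J' \<subset> J} = {}")
  case True
  then have "BB J = 0" unfolding BB_def by (metis sum.empty)
  then show ?thesis by simp
next
  case False
  let ?S = "{J'\<in>\<sigma>. J' \<subset> J}"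
  have P: "\<Union>?S \<in> ?S"
    by (rule chain_Union_mem) (use False fin chain in \<open>auto intro: is_chain_subset\<close>)
  define P where "P = \<Union>?S"
  have P1: "P \<in> \<sigma>" "P \<subset> J" using P unfolding P_def by auto
  have P2: "\<And>J'. J' \<in> \<sigma> \<Longrightarrow> J' \<subset> J \<Longrightarrow> J' \<subseteq> P" unfolding P_def by blast
  obtain i where i: "i \<in> J" "i \<notin> P" using P1 by blast
  have "?S \<subseteq> {J'\<in>\<sigma>. i \<notin> J'}"
  proof
    fix J' assume "J' \<in> ?S"
    then show "J' \<in> {J'\<in>\<sigma>. i \<notin> J'}" using P2[of J'] i by blast
  qed
  then have "BB J \<le> rr m t i" unfolding BB_def rr_eq by (rule sum_mono_sub) auto
  then show ?thesis using i by blast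
qed

end

definition Tf :: "nat \<Rightarrow> (nat \<Rightarrow> real) \<Rightarrow> nat set \<Rightarrow> real" where
  "Tf m r J = (if J \<subseteq> {..<m} then max 0 (Min (insert 1 (r ` ({..<m} - J))) - Max (insert 0 (r ` J))) else 0)"

context simp_data begin

lemma Min_eq_AA:
  assumes J: "J \<subseteq> {..<m}"
  shows "Min (insert 1 (rr m t ` ({..<m} - J))) = AA J"
proof (rule antisym)
  show "AA J \<le> Min (insert 1 (rr m t ` ({..<m} - J)))"
    using AA_le1 rr_ge_AA by (auto simp: Min_ge_iff)
  show "Min (insert 1 (rr m t ` ({..<m} - J))) \<le> AA J"
    using rr_le_AA_witness
  proof
    assume "AA J = 1" then show ?thesis by (simp add: Min_le_iff)
  next
    assume "\<exists>i. i < m \<and> i \<notin> J \<and> rr m t i \<le> AA J"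
    then obtain i where "i < m" "i \<notin> J" "rr m t i \<le> AA J" by blast
    then show ?thesis by (auto simp: Min_le_iff)
  qed
qed

lemma Max_ge_BB:
  assumes J: "J \<subseteq> {..<m}"
  shows "BB J \<le> Max (insert 0 (rr m t ` J))"
  using rr_ge_BB_witness
proof
  have fJ: "finite J" using J finite_subset by blast
  assume "BB J = 0" then show ?thesis using fJ by (auto simp: Max_ge_iff)
next
  have fJ: "finite J" using J finite_subset by blast
  assume "\<exists>i\<in>J. BB J \<le> rr m t i"
  then show ?thesis using fJ by (auto simp: Max_ge_iff)
qed

lemma Max_eq_BB:
  assumes J: "J \<subseteq> {..<m}" and Js: "J \<in> \<sigma>"
  shows "Max (insert 0 (rr m t ` J)) = BB J"
proof (rule antisym)
  show "Max (insert 0 (rr m t ` J)) \<le> BB J"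
  proof -
    have fJ: "finite J" using J finite_subset by blast
    then show ?thesis using BB_nonneg rr_le_BB[OF Js] by (auto simp: Max_le_iff)
  qed
qed (rule Max_ge_BB[OF J])

lemma Tf_recover: "Tf m (rr m t) J = t J"
proof (cases "J \<subseteq> {..<m}")
  case False
  then have "J \<notin> \<sigma>" using sub by auto
  then show ?thesis using False t_zero by (simp add: Tf_def)
next
  case J: True
  show ?thesis
  proof (cases "J \<in> \<sigma>")
    case True
    then show ?thesis using J Min_eq_AA[OF J] Max_eq_BB[OF J True] AA_BB[of J] t_nonneg[of J]
      by (simp add: Tf_def)
  next
    case False
    then show ?thesis using J Min_eq_AA[OF J] Max_ge_BB[OF J] AA_BB[of J] t_zero[OF False]
      by (simp add: Tf_def)
  qed
qed

end

lemma rr_inj: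
  assumes "simp_data m \<sigma> t" "simp_data m \<sigma>' t'" "\<forall>i<m. rr m t i = rr m t' i"
  shows "t = t'"
proof
  fix J
  have "rr m t = rr m t'"
  proof
    fix i show "rr m t i = rr m t' i"
    proof (cases "i < m")
      case True then show ?thesis using assms(3) by simp
    next
      case False
      have "i \<notin> \<Union>\<sigma>" "i \<notin> \<Union>\<sigma>'" using False simp_data.sub[OF assms(1)] simp_data.sub[OF assms(2)] by auto
      then show ?thesis using simp_data.rr_one[OF assms(1)] simp_data.rr_one[OF assms(2)] by simp
    qed
  qed
  then show "t J = t' J"
    using simp_data.Tf_recover[OF assms(1), of J] simp_data.Tf_recover[OF assms(2), of J] by simp
qed

lemma telescope_vs:
  fixes vs :: "real list"
  shows "(\<Sum>j<Suc p. vs!j - (if j = 0 then 0 else vs!(j-1))) = vs!p"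
proof -
  define f where "f k = (if k = 0 then 0 else vs!(k-1))" for k
  have "(\<Sum>j<Suc p. vs!j - (if j = 0 then 0 else vs!(j-1))) = (\<Sum>j<Suc p. f (Suc j) - f j)"
    by (simp add: f_def)
  also have "\<dots> = f (Suc p) - f 0" by (rule sum_lessThan_telescope)
  finally show ?thesis by (simp add: f_def)
qed

lemma exists_simplex:
  fixes r :: "nat \<Rightarrow> real"
  assumes r: "\<And>i. i < m \<Longrightarrow> 0 \<le> r i \<and> r i \<le> 1"
    and K: "simp_complex_on m K" and F: "{i. i < m \<and> r i < 1} \<in> K"
  shows "\<exists>\<sigma> t. \<sigma> \<in> chains K \<and> simp_data m \<sigma> t \<and> (\<forall>i<m. rr m t i = r i)"
proof -
  define V where "V = insert 1 (r ` {..<m})"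
  have finV: "finite V" by (simp add: V_def)
  obtain vs where vs: "sorted_wrt (<) vs" "set vs = V"
    using finite_set_strict_sorted[OF finV] by blast
  define n where "n = length vs"
  have n0: "0 < n" using vs(2) by (auto simp: n_def V_def)
  have vsV: "k < n \<Longrightarrow> vs!k \<in> V" for k using vs(2) by (auto simp: n_def)
  have vs01: "k < n \<Longrightarrow> 0 \<le> vs!k \<and> vs!k \<le> 1" for k
    using vsV[of k] r by (auto simp: V_def)
  have less: "j < k \<Longrightarrow> k < n \<Longrightarrow> vs!j < vs!k" for j k
    using sorted_wrt_nth_less[OF vs(1)] by (simp add: n_def)
  have le_iff: "j < n \<Longrightarrow> k < n \<Longrightarrow> vs!j \<le> vs!k \<longleftrightarrow> j \<le> k" for j k
    using less[of j k] less[of k j] by (cases j k rule: linorder_cases) auto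
  have inV: "v \<in> V \<Longrightarrow> \<exists>p<n. vs!p = v" for v
    using vs(2) by (auto simp: n_def in_set_conv_nth)
  have last1: "vs!(n-1) = 1"
  proof -
    obtain p where p: "p < n" "vs!p = 1" using inV[of 1] by (auto simp: V_def)
    have "\<not> p < n - 1" using less[of p "n-1"] vs01[of "n-1"] p n0 by auto
    then have "p = n - 1" using p by auto
    then show ?thesis using p by simp
  qed
  define g where "g j = vs!j - (if j = 0 then 0 else vs!(j-1))" for j
  have g_nonneg: "j < n \<Longrightarrow> 0 \<le> g j" for j
    using less[of "j-1" j] vs01[of j] by (cases "j = 0") (auto simp: g_def)
  have tel: "p < n \<Longrightarrow> sum g {..<Suc p} = vs!p" for p
    using telescope_vs[of vs p] by (simp add: g_def)
  define L where "L j = {i. i < m \<and> r i < vs!j}" for j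
  define \<sigma> where "\<sigma> = L ` {..<n}"
  define t where "t J = sum g {j. j < n \<and> L j = J}" for J
  have chain: "is_chain \<sigma>"
    unfolding is_chain_def \<sigma>_def L_def
  proof (intro ballI)
    fix I J assume "I \<in> (\<lambda>j. {i. i < m \<and> r i < vs ! j}) ` {..<n}" "J \<in> (\<lambda>j. {i. i < m \<and> r i < vs ! j}) ` {..<n}"
    then obtain a b where "I = {i. i < m \<and> r i < vs ! a}" "J = {i. i < m \<and> r i < vs ! b}" by auto
    then show "I \<subseteq> J \<or> J \<subseteq> I" by (cases "vs!a \<le> vs!b") auto
  qed
  have subK: "\<sigma> \<subseteq> K"
  proof
    fix J assume "J \<in> \<sigma>"
    then obtain j where j: "j < n" "J = L j" by (auto simp: \<sigma>_def)
    have "J \<subseteq> {i. i < m \<and> r i < 1}" using vs01[OF j(1)] j(2) by (auto simp: L_def)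
    then show "J \<in> K" using K F by (auto simp: simp_complex_on_def)
  qed
  have subP: "\<sigma> \<subseteq> Pow {..<m}" by (auto simp: \<sigma>_def L_def)
  have ne: "\<sigma> \<noteq> {}" using n0 by (auto simp: \<sigma>_def)
  have sumg: "sum g {..<n} = 1" using tel[of "n-1"] n0 last1 by simp
  have "sum g {..<n} = sum t \<sigma>"
    unfolding t_def \<sigma>_def by (subst sum.image_gen[of "{..<n}" g L]) (auto intro!: sum.cong)
  then have tsum: "sum t \<sigma> = 1" using sumg by simp
  have tin: "t \<in> simplex_on \<sigma>"
    unfolding simplex_on_def
  proof (intro CollectI conjI allI impI)
    fix I show "0 \<le> t I" unfolding t_def by (rule sum_nonneg) (auto intro: g_nonneg)
  next
    fix I assume "I \<notin> \<sigma>"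
    then have "{j. j < n \<and> L j = I} = {}" by (auto simp: \<sigma>_def)
    then show "t I = 0" unfolding t_def by (metis sum.empty)
  qed (rule tsum)
  have sd: "simp_data m \<sigma> t" by (unfold_locales) (use chain subP ne tin in auto)
  have rr: "rr m t i = r i" if i: "i < m" for i
  proof -
    define S where "S = {j. j < n \<and> i \<notin> L j}"
    have "{J\<in>\<sigma>. i \<notin> J} = L ` S" by (auto simp: S_def \<sigma>_def)
    then have "rr m t i = sum t (L ` S)" by (simp add: simp_data.rr_eq[OF sd])
    also have "\<dots> = sum g S"
      unfolding t_def by (subst sum.image_gen[of S g L]) (auto simp: S_def intro!: sum.cong)
    also obtain p where p: "p < n" "vs!p = r i" using inV[of "r i"] i by (auto simp: V_def)
    have "S = {..<Suc p}"
      using le_iff[of _ p] p i by (auto simp: S_def L_def not_less)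
    then have "sum g S = r i" using tel[OF p(1)] p by simp
    finally show ?thesis .
  qed
  have "\<sigma> \<in> chains K" using chain subK ne by (auto simp: chains_def is_chain_def)
  then show ?thesis using sd rr by blast
qed

lemma continuous_map_cmult [continuous_intros]:
  fixes f g :: "'a \<Rightarrow> 'b::real_normed_algebra"
  shows "continuous_map X euclidean f \<Longrightarrow> continuous_map X euclidean g \<Longrightarrow> continuous_map X euclidean (\<lambda>x. f x * g x)"
  by (simp add: continuous_map_atin tendsto_mult)

lemma continuous_map_of_real' [continuous_intros]:
  "continuous_map X euclideanreal f \<Longrightarrow> continuous_map X euclidean (\<lambda>x. complex_of_real (f x))"
  by (simp add: continuous_map_atin tendsto_of_real)

lemma topspace_cube: "topspace (cube_top m) = PiE {..<m} (\<lambda>_. UNIV)"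
  by (simp add: cube_top_def)

lemma Gm_sub_cube: "Gm d m \<subseteq> topspace (cube_top m)"
  by (auto simp: topspace_cube Gm_def PiE_def)

lemma compact_Sph: "compact (Sph d)"
proof -
  have "closed (Sph d)"
  proof -
    have "Sph d = {z. norm z = 1} \<inter> {z. d = 1 \<longrightarrow> Im z = 0}" by (auto simp: Sph_def)
    moreover have "closed {z::complex. norm z = 1}"
      by (rule closed_Collect_eq) (auto intro: continuous_intros)
    moreover have "closed {z::complex. d = 1 \<longrightarrow> Im z = 0}"
      by (cases "d = 1") (auto intro!: closed_Collect_eq continuous_intros)
    ultimately show ?thesis by auto
  qed
  moreover have "bounded (Sph d)"
    by (rule bounded_subset[of "cball 0 1"]) (auto simp: Sph_def)
  ultimately show ?thesis by (simp add: compact_eq_bounded_closed)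
qed

lemma compactin_Gm: "compactin (cube_top m) (Gm d m)"
  unfolding cube_top_def Gm_def by (simp add: compactin_PiE compact_Sph)

lemma compact_space_quotient_top:
  "compact_space X \<Longrightarrow> compact_space (quotient_top X q)"
  using image_compactin[of X "topspace X" "quotient_top X q" q] continuous_map_quotient_top[of X q]
  by (simp add: compact_space_def)

lemma compact_space_coset_top: "compact_space (coset_top d m N)"
  unfolding coset_top_def
  by (rule compact_space_quotient_top) (rule compact_space_subtopology[OF compactin_Gm])

lemma topspace_coset_top: "topspace (coset_top d m N) = cosets d m N"
  using Gm_sub_cube by (auto simp: coset_top_def cosets_def)

lemma topspace_simplex_top: "topspace (simplex_top \<sigma>) = simplex_on \<sigma>"
  by (simp add: simplex_top_def)

lemma simplex_closed: "finite \<sigma> \<Longrightarrow> closedin (product_topology (\<lambda>_. euclideanreal) UNIV) (simplex_on \<sigma>)"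
proof -
  assume fin: "finite \<sigma>"
  define S where "S I = (if I \<in> \<sigma> then {0..} else {0::real})" for I
  have eq: "simplex_on \<sigma> = PiE UNIV S \<inter> {t \<in> topspace (product_topology (\<lambda>_. euclideanreal) UNIV). sum t \<sigma> \<in> {1}}"
    by (auto simp: simplex_on_def S_def PiE_def Pi_def) (metis order_refl)
  have c1: "closedin (product_topology (\<lambda>_. euclideanreal) UNIV) (PiE UNIV S)"
    by (auto simp: closedin_product_topology S_def)
  have "continuous_map (product_topology (\<lambda>_. euclideanreal) UNIV) euclideanreal (\<lambda>t. sum t \<sigma>)"
    by (intro continuous_map_sum fin continuous_map_product_projection) auto
  then have c2: "closedin (product_topology (\<lambda>_. euclideanreal) UNIV)
      {t \<in> topspace (product_topology (\<lambda>_. euclideanreal) UNIV). sum t \<sigma> \<in> {1}}"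
    by (rule closedin_continuous_map_preimage) simp
  show ?thesis unfolding eq using c1 c2 by (rule closedin_Int)
qed

lemma compact_space_simplex_top: "finite \<sigma> \<Longrightarrow> compact_space (simplex_top \<sigma>)"
proof -
  assume fin: "finite \<sigma>"
  have sub: "simplex_on \<sigma> \<subseteq> PiE UNIV (\<lambda>_. {0..1::real})"
  proof
    fix t assume t: "t \<in> simplex_on \<sigma>"
    have "t I \<le> 1" for I
    proof (cases "I \<in> \<sigma>")
      case True
      have "sum t {I} \<le> sum t \<sigma>"
        by (rule sum_mono2) (use fin True t in \<open>auto simp: simplex_on_def\<close>)
      then show ?thesis using t by (simp add: simplex_on_def)
    next
      case False then show ?thesis using t by (simp add: simplex_on_def)
    qed
    then show "t \<in> PiE UNIV (\<lambda>_. {0..1::real})" using t by (auto simp: simplex_on_def)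
  qed
  have "compactin (product_topology (\<lambda>_. euclideanreal) UNIV) (PiE UNIV (\<lambda>_. {0..1::real}))"
    by (simp add: compactin_PiE)
  then have "compactin (product_topology (\<lambda>_. euclideanreal) UNIV) (simplex_on \<sigma>)"
    using closed_compactin sub simplex_closed[OF fin] by blast
  then show ?thesis unfolding simplex_top_def by (rule compact_space_subtopology)
qed

lemma Hausdorff_simplex_top: "Hausdorff_space (simplex_top \<sigma>)"
  unfolding simplex_top_def
  by (intro Hausdorff_space_subtopology) (simp add: Hausdorff_space_product_topology)

lemma continuous_map_simplex_proj:
  "continuous_map (simplex_top \<sigma>) euclideanreal (\<lambda>t. t I)"
  unfolding simplex_top_def
  by (intro continuous_map_from_subtopology continuous_map_product_projection) simp

lemma continuous_map_rr:
  "continuous_map (simplex_top \<sigma>) euclideanreal (\<lambda>t. rr m t i)"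
  unfolding rr_def
  by (intro continuous_map_sum finite_subsets_m continuous_map_simplex_proj)

lemma continuous_map_cube_proj:
  "i < m \<Longrightarrow> continuous_map (subtopology (cube_top m) S) euclidean (\<lambda>c. c i)"
  unfolding cube_top_def
  by (intro continuous_map_from_subtopology continuous_map_product_projection) simp

definition Dd :: "nat \<Rightarrow> (nat \<Rightarrow> complex) \<Rightarrow> (nat \<Rightarrow> complex) \<Rightarrow> real" where
  "Dd m x y = (\<Sum>i<m. cmod (x i - y i))"

lemma Dd_sym: "Dd m x y = Dd m y x"
  by (simp add: Dd_def norm_minus_commute)

lemma Dd_tri: "Dd m x z \<le> Dd m x y + Dd m y z"
  unfolding Dd_def sum.distrib[symmetric]
proof (rule sum_mono)
  fix i show "cmod (x i - z i) \<le> cmod (x i - y i) + cmod (y i - z i)"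
    using norm_triangle_ineq[of "x i - y i" "y i - z i"] by simp
qed

lemma Dd_nonneg: "0 \<le> Dd m x y"
  unfolding Dd_def by (rule sum_nonneg) simp

lemma Dd_zero: "x \<in> extensional {..<m} \<Longrightarrow> y \<in> extensional {..<m} \<Longrightarrow> Dd m x y = 0 \<Longrightarrow> x = y"
proof -
  assume x: "x \<in> extensional {..<m}" and y: "y \<in> extensional {..<m}" and D: "Dd m x y = 0"
  have "\<forall>i\<in>{..<m}. cmod (x i - y i) = 0"
    using D unfolding Dd_def by (subst sum_nonneg_eq_0_iff[symmetric]) auto
  then show "x = y" using x y by (intro extensionalityI[of _ "{..<m}"]) auto
qed

lemma Dd_inv: "h \<in> Gm d m \<Longrightarrow> Dd m (gmul m h x) (gmul m h y) = Dd m x y"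
proof -
  assume h: "h \<in> Gm d m"
  have "cmod (h i * x i - h i * y i) = cmod (x i - y i)" if "i < m" for i
  proof -
    have "cmod (h i) = 1" using Gm_mem[OF h that] by (simp add: Sph_def)
    then show ?thesis by (simp add: right_diff_distrib[symmetric] norm_mult)
  qed
  then show ?thesis by (simp add: Dd_def gmul_apply)
qed

lemma continuous_map_Dd:
  "continuous_map (subtopology (cube_top m) S) euclideanreal (\<lambda>z. Dd m z w)"
  unfolding Dd_def
  by (intro continuous_map_sum continuous_map_norm continuous_map_diff continuous_map_cube_proj) auto

lemma continuous_map_Dd2:
  "continuous_map (subtopology (cube_top m) S) euclideanreal (\<lambda>h. Dd m y (gmul m h x))"
proof -
  have "continuous_map (subtopology (cube_top m) S) euclideanreal (\<lambda>h. \<Sum>i<m. cmod (y i - h i * x i))"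
    by (intro continuous_map_sum continuous_map_norm continuous_map_diff continuous_map_cmult
        continuous_map_cube_proj) auto
  moreover have "(\<lambda>h. Dd m y (gmul m h x)) = (\<lambda>h. \<Sum>i<m. cmod (y i - h i * x i))"
    by (auto simp: Dd_def gmul_apply fun_eq_iff)
  ultimately show ?thesis by simp
qed

lemma Hausdorff_orbits:
  assumes H: "is_subgroup d m H" and Hc: "compactin (cube_top m) H"
    and P: "P \<subseteq> topspace (cube_top m)" and Pinv: "\<And>h z. h \<in> H \<Longrightarrow> z \<in> P \<Longrightarrow> gmul m h z \<in> P"
  shows "Hausdorff_space (quotient_top (subtopology (cube_top m) P) (\<lambda>x. setmul m H {x}))"
proof -
  let ?X = "subtopology (cube_top m) P"
  let ?q = "\<lambda>x. setmul m H {x}"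
  have tX: "topspace ?X = P" using P by (simp add: Int_absorb1)
  have Pext: "z \<in> P \<Longrightarrow> z \<in> extensional {..<m}" for z using P by (auto simp: topspace_cube PiE_def)
  have HG: "H \<subseteq> Gm d m" using subgroupD(1)[OF H] .
  have sat: "\<exists>k\<in>H. z = gmul m k z'" if "z \<in> P" "z' \<in> P" "?q z = ?q z'" for z z'
    using orbit_eq_iff[OF H Pext[OF that(2)] Pext[OF that(1)]] that(3) by simp
  \<comment> \<open>open saturated neighbourhoods of orbits\<close>
  define W where "W x e = {z\<in>P. \<exists>h\<in>H. Dd m z (gmul m h x) < e}" for x e
  have W_open: "openin ?X (W x e)" for x e
  proof -
    have "W x e = (\<Union>h\<in>H. {z \<in> topspace ?X. Dd m z (gmul m h x) \<in> {..<e}})"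
      unfolding W_def tX using P by blast
    also have "openin ?X \<dots>"
    proof (intro openin_Union ballI)
      fix U assume "U \<in> (\<lambda>h. {z \<in> topspace ?X. Dd m z (gmul m h x) \<in> {..<e}}) ` H"
      then obtain h where "U = {z \<in> topspace ?X. Dd m z (gmul m h x) \<in> {..<e}}" by blast
      then show "openin ?X U"
        using openin_continuous_map_preimage[OF continuous_map_Dd[of m P "gmul m h x"], of "{..<e}"] by simp
    qed
    finally show ?thesis .
  qed
  have W_sat: "gmul m k z \<in> W x e" if kz: "k \<in> H" "z \<in> W x e" "x \<in> P" for k z x e
  proof -
    obtain h where h: "h \<in> H" "z \<in> P" "Dd m z (gmul m h x) < e" using kz(2) by (auto simp: W_def)
    have "Dd m (gmul m k z) (gmul m (gmul m k h) x) = Dd m (gmul m k z) (gmul m k (gmul m h x))"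
      by (simp add: gmul_assoc)
    also have "\<dots> = Dd m z (gmul m h x)" using kz(1) HG by (intro Dd_inv) auto
    finally have "Dd m (gmul m k z) (gmul m (gmul m k h) x) < e" using h by simp
    moreover have "gmul m k h \<in> H" using h kz(1) subgroupD(3)[OF H] by blast
    moreover have "gmul m k z \<in> P" using h kz(1) Pinv by blast
    ultimately show ?thesis unfolding W_def by blast
  qed
  have W_open_q: "openin (quotient_top ?X ?q) (?q ` W x e)" if "x \<in> P" for x e
  proof -
    have "{z \<in> topspace ?X. ?q z \<in> ?q ` W x e} = W x e"
    proof
      show "{z \<in> topspace ?X. ?q z \<in> ?q ` W x e} \<subseteq> W x e"
      proof
        fix z assume "z \<in> {z \<in> topspace ?X. ?q z \<in> ?q ` W x e}"
        then obtain z' where z': "z \<in> P" "z' \<in> W x e" "?q z = ?q z'" by (auto simp: tX)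
        then have "z' \<in> P" by (auto simp: W_def)
        then obtain k where "k \<in> H" "z = gmul m k z'" using sat z' by blast
        then show "z \<in> W x e" using W_sat z' that by blast
      qed
    qed (use P in \<open>auto simp: tX W_def\<close>)
    then show ?thesis using W_open[of x e] by (auto simp: openin_quotient_top tX W_def)
  qed
  show ?thesis
    unfolding Hausdorff_space_def
  proof (intro allI impI)
    fix a b assume ab: "a \<in> topspace (quotient_top ?X ?q) \<and> b \<in> topspace (quotient_top ?X ?q) \<and> a \<noteq> b"
    then obtain x y where xy: "x \<in> P" "y \<in> P" "a = ?q x" "b = ?q y" by (auto simp: tX)
    define \<phi> where "\<phi> h = Dd m y (gmul m h x)" for h
    have "compactin euclideanreal (\<phi> ` H)"
    proof -
      have "continuous_map (cube_top m) euclideanreal \<phi>"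
        using continuous_map_Dd2[of m "topspace (cube_top m)" y x] unfolding \<phi>_def by simp
      then show ?thesis by (rule image_compactin[OF Hc])
    qed
    then have "compact (\<phi> ` H)" by simp
    moreover have "\<phi> ` H \<noteq> {}" using subgroupD(2)[OF H] by auto
    ultimately obtain s where s: "s \<in> \<phi> ` H" "\<forall>u\<in>\<phi> ` H. s \<le> u"
      using compact_attains_inf[of "\<phi> ` H"] by blast
    obtain h0 where h0: "h0 \<in> H" "s = \<phi> h0" using s(1) by auto
    have "s > 0"
    proof (rule ccontr)
      assume "\<not> s > 0"
      then have "\<phi> h0 = 0" using h0 Dd_nonneg[of m y "gmul m h0 x"] unfolding \<phi>_def by linarith
      then have "y = gmul m h0 x" unfolding \<phi>_def by (rule Dd_zero[OF Pext[OF xy(2)] gmul_ext])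
      then have "?q y = ?q x" using orbit_eq_iff[OF H Pext[OF xy(1)] Pext[OF xy(2)]] h0(1) by auto
      then show False using ab xy by simp
    qed
    define e where "e = s / 3"
    have e: "e > 0" using \<open>s > 0\<close> by (simp add: e_def)
    have xW: "x \<in> W x e"
    proof -
      have "Dd m x (gmul m (gone m) x) = 0" using gmul_one[OF Pext[OF xy(1)]] by (simp add: Dd_def)
      then have "Dd m x (gmul m (gone m) x) < e" using e by simp
      then show ?thesis unfolding W_def using xy(1) subgroupD(2)[OF H] by blast
    qed
    have yW: "y \<in> W y e"
    proof -
      have "Dd m y (gmul m (gone m) y) = 0" using gmul_one[OF Pext[OF xy(2)]] by (simp add: Dd_def)
      then have "Dd m y (gmul m (gone m) y) < e" using e by simp
      then show ?thesis unfolding W_def using xy(2) subgroupD(2)[OF H] by blast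
    qed
    have disj: "disjnt (?q ` W x e) (?q ` W y e)"
      unfolding disjnt_def
    proof (rule ccontr)
      assume "?q ` W x e \<inter> ?q ` W y e \<noteq> {}"
      then obtain z1 z2 where z: "z1 \<in> W x e" "z2 \<in> W y e" "?q z1 = ?q z2" by auto
      have z12: "z1 \<in> P" "z2 \<in> P" using z by (auto simp: W_def)
      obtain k where k: "k \<in> H" "z2 = gmul m k z1" using sat[OF z12(2) z12(1)] z(3) by auto
      have "z2 \<in> W x e" using W_sat[OF k(1) z(1) xy(1)] k by simp
      then obtain h where h: "h \<in> H" "Dd m z2 (gmul m h x) < e" by (auto simp: W_def)
      obtain h' where h': "h' \<in> H" "Dd m z2 (gmul m h' y) < e" using z(2) by (auto simp: W_def)
      have h'G: "h' \<in> Gm d m" using h' HG by auto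
      define w where "w = gmul m (gmul m (ginv m h') h) x"
      have "gmul m h' w = gmul m h x"
      proof -
        have "gmul m h' w = gmul m (gmul m h' (ginv m h')) (gmul m h x)"
          unfolding w_def by (simp only: gmul_assoc)
        also have "\<dots> = gmul m h x" using h'G by (simp add: gmul_ginv gmul_one)
        finally show ?thesis .
      qed
      have "\<phi> (gmul m (ginv m h') h) = Dd m y w" by (simp add: \<phi>_def w_def)
      also have "\<dots> = Dd m (gmul m h' y) (gmul m h' w)" using Dd_inv[OF h'G] by simp
      also have "\<dots> = Dd m (gmul m h' y) (gmul m h x)" using \<open>gmul m h' w = gmul m h x\<close> by simp
      also have "\<dots> \<le> Dd m (gmul m h' y) z2 + Dd m z2 (gmul m h x)" by (rule Dd_tri)
      also have "\<dots> < 2 * e" using h h' by (simp add: Dd_sym)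
      finally have "\<phi> (gmul m (ginv m h') h) < 2 * e" .
      moreover have "gmul m (ginv m h') h \<in> H" using h h' subgroupD(3,4)[OF H] by auto
      then have "s \<le> \<phi> (gmul m (ginv m h') h)" using s(2) by blast
      ultimately show False using e by (simp add: e_def)
    qed
    show "\<exists>U V. openin (quotient_top ?X ?q) U \<and> openin (quotient_top ?X ?q) V \<and> a \<in> U \<and> b \<in> V \<and> disjnt U V"
      using W_open_q[OF xy(1), of e] W_open_q[OF xy(2), of e] xW yW disj xy(3,4) by blast
  qed
qed

lemma Disk_mult: "a \<in> Sph d \<Longrightarrow> z \<in> Disk d \<Longrightarrow> a * z \<in> Disk d"
  by (auto simp: Sph_def Disk_def norm_mult)

lemma P_iff: "x \<in> polyhedral_product d m K \<longleftrightarrow>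
   x \<in> extensional {..<m} \<and> (\<forall>i<m. x i \<in> Disk d) \<and> (\<exists>I\<in>K. \<forall>j<m. j \<notin> I \<longrightarrow> x j \<in> Sph d)"
  by (auto simp: polyhedral_product_def PiE_def Pi_def)

locale setting =
  fixes d m :: nat and K :: "nat set set" and H :: "(nat \<Rightarrow> complex) set"
  assumes dd: "d \<in> {1, 2}" and K: "simp_complex_on m K" and Hc: "closed_subgroup d m H"
begin

abbreviation "P \<equiv> polyhedral_product d m K"
abbreviation "q \<equiv> (\<lambda>x. setmul m H {x})"
abbreviation "N \<equiv> NI d m H"

definition vec :: "(nat set \<Rightarrow> real) \<Rightarrow> (nat \<Rightarrow> complex) \<Rightarrow> nat \<Rightarrow> complex" where
  "vec t c = (\<lambda>i\<in>{..<m}. complex_of_real (rr m t i) * c i)"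

definition gmap :: "(nat set \<Rightarrow> real) \<times> (nat \<Rightarrow> complex) set \<Rightarrow> (nat \<Rightarrow> complex) set" where
  "gmap p = q (vec (fst p) (SOME c. c \<in> snd p))"

lemma H: "is_subgroup d m H" using Hc by (simp add: closed_subgroup_def)

lemma Hclosed: "closedin (cube_top m) H" using Hc by (simp add: closed_subgroup_def)

lemma HG: "H \<subseteq> Gm d m" using subgroupD(1)[OF H] .

lemma Hcompact: "compactin (cube_top m) H"
  using closed_compactin[OF compactin_Gm HG Hclosed] .

lemma N_subgroup: "is_subgroup d m (N I)" by (rule NI_subgroup[OF H])

lemma H_N: "H \<subseteq> N I" by (rule H_sub_NI[OF H])

lemma K_pow: "K \<subseteq> Pow {..<m}" using K by (simp add: simp_complex_on_def)

lemma finite_K: "finite K" using K_pow finite_subset by blast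

lemma finite_chains: "finite (chains K)"
  by (rule finite_subset[of _ "Pow K"]) (auto simp: chains_def finite_K)

lemma chainsD: "\<sigma> \<in> chains K \<Longrightarrow> is_chain \<sigma> \<and> \<sigma> \<subseteq> K \<and> \<sigma> \<noteq> {}"
  by (auto simp: chains_def is_chain_def)

lemma sd: "\<sigma> \<in> chains K \<Longrightarrow> t \<in> simplex_on \<sigma> \<Longrightarrow> simp_data m \<sigma> t"
  using chainsD[of \<sigma>] K_pow by unfold_locales auto

lemma P_sub: "P \<subseteq> topspace (cube_top m)"
  by (auto simp: P_iff topspace_cube PiE_def)

lemma P_ext: "x \<in> P \<Longrightarrow> x \<in> extensional {..<m}"
  by (simp add: P_iff)

lemma P_inv: "a \<in> Gm d m \<Longrightarrow> x \<in> P \<Longrightarrow> gmul m a x \<in> P"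
proof -
  assume a: "a \<in> Gm d m" and x: "x \<in> P"
  then obtain I where I: "I \<in> K" "\<forall>j<m. j \<notin> I \<longrightarrow> x j \<in> Sph d" by (auto simp: P_iff)
  have "\<forall>j<m. j \<notin> I \<longrightarrow> gmul m a x j \<in> Sph d"
    using I(2) a by (auto simp: gmul_apply Gm_iff intro: Sph_mult)
  moreover have "\<forall>i<m. gmul m a x i \<in> Disk d"
    using x a by (auto simp: gmul_apply Gm_iff P_iff intro: Disk_mult)
  ultimately show ?thesis using I(1) by (auto simp: P_iff)
qed

lemma vec_ext [simp]: "vec t c \<in> extensional {..<m}"
  by (simp add: vec_def)

lemma vec_gmul: "vec t (gmul m a c) = gmul m a (vec t c)"
  by (auto simp: vec_def gmul_apply fun_eq_iff)

lemma vec_in_P: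
  assumes s: "\<sigma> \<in> chains K" and t: "t \<in> simplex_on \<sigma>" and c: "c \<in> Gm d m"
  shows "vec t c \<in> P"
proof -
  interpret simp_data m \<sigma> t by (rule sd[OF s t])
  have U: "\<Union>\<sigma> \<in> K" using chain_Union_mem[OF fin ne chain] chainsD[OF s] by auto
  have "vec t c i \<in> Disk d" if i: "i < m" for i
  proof -
    have ci: "c i \<in> Sph d" using Gm_mem[OF c i] .
    have "cmod (vec t c i) = rr m t i" using ci rr_nonneg i by (simp add: vec_def norm_mult Sph_def)
    moreover have "d = 1 \<longrightarrow> Im (vec t c i) = 0" using ci i by (simp add: vec_def Sph_def)
    ultimately show ?thesis using rr_le1 by (simp add: Disk_def)
  qed
  moreover have "vec t c j \<in> Sph d" if j: "j < m" "j \<notin> \<Union>\<sigma>" for j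
    using rr_one[OF j(2)] Gm_mem[OF c j(1)] j(1) by (simp add: vec_def)
  ultimately show ?thesis using U unfolding P_iff by (intro conjI vec_ext bexI[of _ "\<Union>\<sigma>"]) auto
qed

lemma key:
  assumes s: "\<sigma> \<in> chains K" and t: "t \<in> simplex_on \<sigma>" and c: "c \<in> Gm d m"
    and c': "c' \<in> setmul m {c} (N (\<Inter>{I\<in>\<sigma>. t I \<noteq> 0}))"
  shows "q (vec t c') = q (vec t c)"
proof -
  interpret simp_data m \<sigma> t by (rule sd[OF s t])
  let ?S = "\<Inter>{I\<in>\<sigma>. t I \<noteq> 0}"
  obtain n where n: "n \<in> N ?S" "c' = gmul m c n" using c' by (rule setmul_singletonE)
  obtain a h where ah: "a \<in> GI d m ?S" "h \<in> H" "n = gmul m a h"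
    using n(1) unfolding NI_eq[OF H] by (rule setmulE)
  have "vec t c' = gmul m h (vec t c)"
  proof (rule ext)
    fix i show "vec t c' i = gmul m h (vec t c) i"
    proof (cases "i < m")
      case False then show ?thesis by (simp add: vec_def gmul_apply)
    next
      case True
      show ?thesis
      proof (cases "i \<in> ?S")
        case True
        then have "rr m t i = 0" using rr_zero_iff by (simp add: supp_def)
        then show ?thesis using \<open>i < m\<close> by (simp add: vec_def gmul_apply)
      next
        case False
        then have "a i = 1" using ah(1) \<open>i < m\<close> by (simp add: GI_iff)
        then show ?thesis using \<open>i < m\<close> n(2) ah(3) by (simp add: vec_def gmul_apply)
      qed
    qed
  qed
  then show ?thesis using orbit_eq_iff[OF H vec_ext vec_ext] ah(2) by blast
qed

definition hpt :: "nat set set \<Rightarrow> (nat set \<Rightarrow> real) \<Rightarrow> (nat \<Rightarrow> complex) \<Rightarrow> (nat set \<Rightarrow> real) \<times> (nat \<Rightarrow> complex) set" where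
  "hpt \<sigma> t c = (t, setmul m {c} (N (\<Inter>{I\<in>\<sigma>. t I \<noteq> 0})))"

lemma gmap_hpt:
  assumes s: "\<sigma> \<in> chains K" and t: "t \<in> simplex_on \<sigma>" and c: "c \<in> Gm d m"
  shows "gmap (hpt \<sigma> t c) = q (vec t c)"
proof -
  have "(SOME c'. c' \<in> setmul m {c} (N (\<Inter>{I\<in>\<sigma>. t I \<noteq> 0}))) \<in> setmul m {c} (N (\<Inter>{I\<in>\<sigma>. t I \<noteq> 0}))"
    by (rule someI[of _ c]) (rule coset_self[OF N_subgroup c])
  then show ?thesis unfolding gmap_def hpt_def using key[OF s t c] by simp
qed

lemma proj_hpt:
  assumes s: "\<sigma> \<in> chains K" and t: "t \<in> simplex_on \<sigma>" and c: "c \<in> Gm d m"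
  shows "hocolim_proj d m H (\<sigma>, t, setmul m {c} (N (\<Inter>\<sigma>))) = hpt \<sigma> t c"
proof -
  interpret simp_data m \<sigma> t by (rule sd[OF s t])
  have "\<Inter>\<sigma> \<subseteq> \<Inter>{I\<in>\<sigma>. t I \<noteq> 0}" by auto
  then have "N (\<Inter>\<sigma>) \<subseteq> N (\<Inter>{I\<in>\<sigma>. t I \<noteq> 0})" by (rule NI_mono[OF H])
  then show ?thesis unfolding hocolim_proj_def hpt_def
    using coset_setmul[OF N_subgroup N_subgroup _ c] by simp
qed

lemma topspace_cells:
  "topspace (hocolim_cells d m K H) = Sigma (chains K) (\<lambda>\<sigma>. simplex_on \<sigma> \<times> cosets d m (N (\<Inter>\<sigma>)))"
  by (auto simp: hocolim_cells_def topspace_simplex_top topspace_coset_top)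

lemma topspace_hocolim:
  "p \<in> topspace (hocolim d m K H) \<longleftrightarrow> (\<exists>\<sigma> t c. \<sigma> \<in> chains K \<and> t \<in> simplex_on \<sigma> \<and> c \<in> Gm d m \<and> p = hpt \<sigma> t c)"
proof
  assume "p \<in> topspace (hocolim d m K H)"
  then obtain \<sigma> t C where x: "\<sigma> \<in> chains K" "t \<in> simplex_on \<sigma>" "C \<in> cosets d m (N (\<Inter>\<sigma>))"
    "p = hocolim_proj d m H (\<sigma>, t, C)"
    by (auto simp: hocolim_def topspace_cells)
  then obtain c where c: "c \<in> Gm d m" "C = setmul m {c} (N (\<Inter>\<sigma>))" by (auto simp: cosets_def)
  show "\<exists>\<sigma> t c. \<sigma> \<in> chains K \<and> t \<in> simplex_on \<sigma> \<and> c \<in> Gm d m \<and> p = hpt \<sigma> t c"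
    using x c proj_hpt by blast
next
  assume "\<exists>\<sigma> t c. \<sigma> \<in> chains K \<and> t \<in> simplex_on \<sigma> \<and> c \<in> Gm d m \<and> p = hpt \<sigma> t c"
  then obtain \<sigma> t c where x: "\<sigma> \<in> chains K" "t \<in> simplex_on \<sigma>" "c \<in> Gm d m" "p = hpt \<sigma> t c" by blast
  then have "(\<sigma>, t, setmul m {c} (N (\<Inter>\<sigma>))) \<in> topspace (hocolim_cells d m K H)"
    by (auto simp: topspace_cells cosets_def)
  then show "p \<in> topspace (hocolim d m K H)"
    using proj_hpt[OF x(1-3)] x(4) by (force simp: hocolim_def)
qed

lemma topspace_orbit: "topspace (orbit_space d m K H) = q ` P"
  using P_sub by (auto simp: orbit_space_def)

end

context setting begin

lemma cont_vec_comp: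
  assumes k: "k < m"
  shows "continuous_map (prod_topology (simplex_top \<sigma>) (subtopology (cube_top m) (Gm d m))) euclidean
      (\<lambda>p. vec (fst p) (snd p) k)"
proof -
  have c1: "continuous_map (prod_topology (simplex_top \<sigma>) (subtopology (cube_top m) (Gm d m))) euclideanreal (\<lambda>x. rr m (fst x) k)"
    using continuous_map_compose[OF continuous_map_fst continuous_map_rr[of \<sigma> m k]] by (simp add: o_def)
  have c2: "continuous_map (prod_topology (simplex_top \<sigma>) (subtopology (cube_top m) (Gm d m))) euclidean (\<lambda>x. snd x k)"
    using continuous_map_compose[OF continuous_map_snd continuous_map_cube_proj[OF k, of "Gm d m"]]
    by (simp add: o_def)
  have "continuous_map (prod_topology (simplex_top \<sigma>) (subtopology (cube_top m) (Gm d m))) euclidean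
      (\<lambda>p. complex_of_real (rr m (fst p) k) * snd p k)"
    by (rule continuous_map_cmult[OF continuous_map_of_real'[OF c1] c2])
  moreover have "(\<lambda>p. vec (fst p) (snd p) k) = (\<lambda>p. complex_of_real (rr m (fst p) k) * snd p k)"
    using k by (simp add: vec_def)
  ultimately show ?thesis by simp
qed

lemma cont_vec:
  "continuous_map (prod_topology (simplex_top \<sigma>) (subtopology (cube_top m) (Gm d m))) (cube_top m)
     (\<lambda>p. vec (fst p) (snd p))"
proof -
  have "continuous_map (prod_topology (simplex_top \<sigma>) (subtopology (cube_top m) (Gm d m)))
     (product_topology (\<lambda>_. euclidean) {..<m}) (\<lambda>p. vec (fst p) (snd p))"
    by (rule iffD2[OF continuous_map_componentwise]) (use cont_vec_comp in auto)
  then show ?thesis by (simp add: cube_top_def)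
qed

lemma cont_gmap: "continuous_map (hocolim d m K H) (orbit_space d m K H) gmap"
  unfolding hocolim_def
proof (rule continuous_map_from_quotient_top)
  show "continuous_map (hocolim_cells d m K H) (orbit_space d m K H) (gmap \<circ> hocolim_proj d m H)"
    unfolding hocolim_cells_def
  proof (rule continuous_map_from_sum_topology)
    fix \<sigma> assume s: "\<sigma> \<in> chains K"
    have fs: "finite \<sigma>" using chainsD[OF s] finite_K finite_subset by blast
    let ?Q = "\<lambda>(t::nat set \<Rightarrow> real, c). (t, setmul m {c} (N (\<Inter>\<sigma>)))"
    let ?Z = "prod_topology (simplex_top \<sigma>) (subtopology (cube_top m) (Gm d m))"
    have qm: "quotient_map ?Z (prod_topology (simplex_top \<sigma>) (coset_top d m (N (\<Inter>\<sigma>)))) ?Q"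
      unfolding coset_top_def
      by (rule quotient_map_prod_right[OF compact_imp_locally_compact_space[OF compact_space_simplex_top[OF fs]]
          disjI1[OF Hausdorff_simplex_top] quotient_map_quotient_top])
    have cv: "continuous_map ?Z (subtopology (cube_top m) P) (\<lambda>p. vec (fst p) (snd p))"
      unfolding continuous_map_in_subtopology
    proof
      show "continuous_map ?Z (cube_top m) (\<lambda>p. vec (fst p) (snd p))" by (rule cont_vec)
      show "(\<lambda>p. vec (fst p) (snd p)) \<in> topspace ?Z \<rightarrow> P"
        using vec_in_P[OF s] by (auto simp: topspace_simplex_top)
    qed
    have cq: "continuous_map (subtopology (cube_top m) P) (orbit_space d m K H) q"
      unfolding orbit_space_def by (rule continuous_map_quotient_top)
    have "continuous_map ?Z (orbit_space d m K H) ((\<lambda>x. (gmap \<circ> hocolim_proj d m H) (\<sigma>, x)) \<circ> ?Q)"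
    proof (rule continuous_map_eq)
      show "continuous_map ?Z (orbit_space d m K H) (q \<circ> (\<lambda>p. vec (fst p) (snd p)))"
        by (rule continuous_map_compose[OF cv cq])
      fix p assume "p \<in> topspace ?Z"
      then obtain t c where p: "p = (t, c)" "t \<in> simplex_on \<sigma>" "c \<in> Gm d m"
        by (auto simp: topspace_simplex_top)
      show "(q \<circ> (\<lambda>p. vec (fst p) (snd p))) p = ((\<lambda>x. (gmap \<circ> hocolim_proj d m H) (\<sigma>, x)) \<circ> ?Q) p"
        using p proj_hpt[OF s p(2,3)] gmap_hpt[OF s p(2,3)] by simp
    qed
    then show "continuous_map (prod_topology (simplex_top \<sigma>) (coset_top d m (N (\<Inter>\<sigma>)))) (orbit_space d m K H)
        (\<lambda>x. (gmap \<circ> hocolim_proj d m H) (\<sigma>, x))"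
      by (rule continuous_compose_quotient_map[OF qm])
  qed
qed

lemma compact_hocolim: "compact_space (hocolim d m K H)"
  unfolding hocolim_def
proof (rule compact_space_quotient_top)
  show "compact_space (hocolim_cells d m K H)"
    unfolding hocolim_cells_def
  proof (rule compact_space_sum_topology[OF finite_chains])
    fix \<sigma> assume s: "\<sigma> \<in> chains K"
    have fs: "finite \<sigma>" using chainsD[OF s] finite_K finite_subset by blast
    show "compact_space (prod_topology (simplex_top \<sigma>) (coset_top d m (N (\<Inter>\<sigma>))))"
      by (simp add: compact_space_prod_topology compact_space_simplex_top[OF fs] compact_space_coset_top)
  qed
qed

lemma Hausdorff_orbit: "Hausdorff_space (orbit_space d m K H)"
  unfolding orbit_space_def
proof (rule Hausdorff_orbits[OF H Hcompact P_sub])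
  fix h z assume "h \<in> H" "z \<in> P"
  then show "gmul m h z \<in> P" using P_inv HG by blast
qed

end

context setting begin

lemma cmod_vec: "i < m \<Longrightarrow> c \<in> Gm d m \<Longrightarrow> 0 \<le> rr m t i \<Longrightarrow> cmod (vec t c i) = rr m t i"
  using Gm_mem[of c d m i] by (simp add: vec_def norm_mult Sph_def)

lemma gmap_inj: "inj_on gmap (topspace (hocolim d m K H))"
proof (rule inj_onI)
  fix p1 p2 assume p1: "p1 \<in> topspace (hocolim d m K H)" and p2: "p2 \<in> topspace (hocolim d m K H)"
    and eq: "gmap p1 = gmap p2"
  obtain \<sigma>1 t1 c1 where x1: "\<sigma>1 \<in> chains K" "t1 \<in> simplex_on \<sigma>1" "c1 \<in> Gm d m" "p1 = hpt \<sigma>1 t1 c1"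
    using p1 topspace_hocolim by blast
  obtain \<sigma>2 t2 c2 where x2: "\<sigma>2 \<in> chains K" "t2 \<in> simplex_on \<sigma>2" "c2 \<in> Gm d m" "p2 = hpt \<sigma>2 t2 c2"
    using p2 topspace_hocolim by blast
  interpret s1: simp_data m \<sigma>1 t1 by (rule sd[OF x1(1,2)])
  interpret s2: simp_data m \<sigma>2 t2 by (rule sd[OF x2(1,2)])
  have "q (vec t2 c2) = q (vec t1 c1)"
    using eq gmap_hpt[OF x1(1-3)] gmap_hpt[OF x2(1-3)] x1(4) x2(4) by simp
  then obtain h where h: "h \<in> H" "vec t2 c2 = gmul m h (vec t1 c1)"
    using orbit_eq_iff[OF H vec_ext vec_ext] by blast
  have hG: "h \<in> Gm d m" using h(1) HG by auto
  have rr_eq: "\<forall>i<m. rr m t1 i = rr m t2 i"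
  proof (intro allI impI)
    fix i assume i: "i < m"
    have "rr m t2 i = cmod (vec t2 c2 i)" using cmod_vec[OF i x2(3) s2.rr_nonneg] by simp
    also have "\<dots> = cmod (h i) * cmod (vec t1 c1 i)" using h(2) i by (simp add: gmul_apply norm_mult)
    also have "\<dots> = rr m t1 i" using cmod_vec[OF i x1(3) s1.rr_nonneg] Gm_mem[OF hG i] by (simp add: Sph_def)
    finally show "rr m t1 i = rr m t2 i" by simp
  qed
  have tt: "t1 = t2" by (rule rr_inj[OF sd[OF x1(1,2)] sd[OF x2(1,2)] rr_eq])
  have supp_eq: "{I\<in>\<sigma>1. t1 I \<noteq> 0} = {I\<in>\<sigma>2. t2 I \<noteq> 0}"
    using tt s1.t_zero s2.t_zero by blast
  define S where "S = \<Inter>{I\<in>\<sigma>1. t1 I \<noteq> 0}"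
  have rr0: "i < m \<Longrightarrow> rr m t1 i = 0 \<longleftrightarrow> i \<in> S" for i
    using s1.rr_zero_iff by (simp add: S_def s1.supp_def)
  define a where "a = gmul m c2 (ginv m (gmul m c1 h))"
  have aG: "a \<in> Gm d m" unfolding a_def using x1(3) x2(3) hG by (intro gmul_Gm ginv_Gm) auto
  have a1: "a j = 1" if j: "j < m" "j \<notin> S" for j
  proof -
    have r: "rr m t1 j \<noteq> 0" using rr0[OF j(1)] j(2) by simp
    have "complex_of_real (rr m t2 j) * c2 j = h j * (complex_of_real (rr m t1 j) * c1 j)"
      using fun_cong[OF h(2), of j] j(1) by (simp add: vec_def gmul_apply)
    then have "c2 j = h j * c1 j" using r tt by (simp add: mult.left_commute)
    moreover have "c1 j \<noteq> 0" "h j \<noteq> 0" using Gm_mem[OF x1(3) j(1)] Gm_mem[OF hG j(1)] Sph_nz by auto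
    ultimately show ?thesis using j(1) by (simp add: a_def gmul_apply ginv_def field_simps)
  qed
  have aGI: "a \<in> GI d m S" using aG a1 by (simp add: GI_iff)
  have "gmul m a h \<in> N S" unfolding NI_eq[OF H] by (rule setmulI[OF aGI h(1)])
  moreover have "c2 = gmul m c1 (gmul m a h)"
  proof (rule extensionalityI[of _ "{..<m}"])
    show "c2 \<in> extensional {..<m}" using x2(3) Gm_ext by blast
    show "gmul m c1 (gmul m a h) \<in> extensional {..<m}" by simp
    fix i assume i: "i \<in> {..<m}"
    have "c1 i \<noteq> 0" "h i \<noteq> 0" using Gm_mem[OF x1(3)] Gm_mem[OF hG] Sph_nz i by auto
    then show "c2 i = gmul m c1 (gmul m a h) i" using i by (simp add: a_def gmul_apply ginv_def field_simps)
  qed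
  ultimately have "c2 \<in> setmul m {c1} (N S)" by (blast intro: setmul_singletonI)
  then have "setmul m {c2} (N S) = setmul m {c1} (N S)" by (rule coset_eq_mem[OF N_subgroup x1(3)])
  then show "p1 = p2" using x1(4) x2(4) tt supp_eq by (simp add: hpt_def S_def)
qed

lemma gmap_surj: "gmap ` topspace (hocolim d m K H) = topspace (orbit_space d m K H)"
proof
  show "gmap ` topspace (hocolim d m K H) \<subseteq> topspace (orbit_space d m K H)"
  proof
    fix y assume "y \<in> gmap ` topspace (hocolim d m K H)"
    then obtain p where p: "p \<in> topspace (hocolim d m K H)" "y = gmap p" by blast
    from p(1) obtain \<sigma> t c where x0: "\<sigma> \<in> chains K" "t \<in> simplex_on \<sigma>" "c \<in> Gm d m" "p = hpt \<sigma> t c"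
      unfolding topspace_hocolim by blast
    then have x: "\<sigma> \<in> chains K" "t \<in> simplex_on \<sigma>" "c \<in> Gm d m" "y = gmap (hpt \<sigma> t c)"
      using p(2) by auto
    then show "y \<in> topspace (orbit_space d m K H)"
      using gmap_hpt[OF x(1-3)] vec_in_P[OF x(1-3)] by (simp add: topspace_orbit)
  qed
  show "topspace (orbit_space d m K H) \<subseteq> gmap ` topspace (hocolim d m K H)"
  proof
    fix y assume "y \<in> topspace (orbit_space d m K H)"
    then obtain x where x: "x \<in> P" "y = q x" by (auto simp: topspace_orbit)
    obtain I where I: "I \<in> K" "\<forall>j<m. j \<notin> I \<longrightarrow> x j \<in> Sph d" using x(1) by (auto simp: P_iff)
    have xD: "i < m \<Longrightarrow> x i \<in> Disk d" for i using x(1) by (auto simp: P_iff)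
    define r where "r i = cmod (x i)" for i
    have r01: "i < m \<Longrightarrow> 0 \<le> r i \<and> r i \<le> 1" for i using xD[of i] by (simp add: r_def Disk_def)
    have "{i. i < m \<and> r i < 1} \<subseteq> I" using I(2) by (auto simp: r_def Sph_def)
    then have F: "{i. i < m \<and> r i < 1} \<in> K" using K I(1) by (auto simp: simp_complex_on_def)
    obtain \<sigma> t where st: "\<sigma> \<in> chains K" "simp_data m \<sigma> t" "\<forall>i<m. rr m t i = r i"
      using exists_simplex[OF r01 K F] by blast
    have t: "t \<in> simplex_on \<sigma>" using simp_data.tin[OF st(2)] .
    define c where "c = (\<lambda>i\<in>{..<m}. if x i = 0 then 1 else x i / complex_of_real (cmod (x i)))"
    have cG: "c \<in> Gm d m"
      unfolding Gm_iff
    proof (intro conjI allI impI)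
      show "c \<in> extensional {..<m}" by (simp add: c_def)
      fix i assume i: "i < m"
      show "c i \<in> Sph d"
      proof (cases "x i = 0")
        case True then show ?thesis using i by (simp add: c_def)
      next
        case False
        have "cmod (c i) = 1" using False i by (simp add: c_def norm_divide)
        moreover have "d = 1 \<longrightarrow> Im (c i) = 0" using xD[OF i] False i by (simp add: c_def Disk_def Im_divide_of_real)
        ultimately show ?thesis by (simp add: Sph_def)
      qed
    qed
    have "vec t c = x"
    proof (rule extensionalityI[of _ "{..<m}"])
      show "vec t c \<in> extensional {..<m}" by simp
      show "x \<in> extensional {..<m}" using P_ext[OF x(1)] .
      fix i assume i: "i \<in> {..<m}"
      show "vec t c i = x i" using i st(3) by (simp add: vec_def c_def r_def)
    qed
    then have "gmap (hpt \<sigma> t c) = y" using gmap_hpt[OF st(1) t cG] x(2) by simp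
    moreover have "hpt \<sigma> t c \<in> topspace (hocolim d m K H)" using st(1) t cG topspace_hocolim by blast
    ultimately show "y \<in> gmap ` topspace (hocolim d m K H)" by blast
  qed
qed

lemma act_hpt:
  assumes s: "\<sigma> \<in> chains K" and t: "t \<in> simplex_on \<sigma>" and c: "c \<in> Gm d m" and a: "a \<in> Gm d m"
  shows "hocolim_act m (setmul m {a} H) (hpt \<sigma> t c) = hpt \<sigma> t (gmul m a c)"
  unfolding hocolim_act_def hpt_def Lact_def
  using coset_act[OF H N_subgroup H_N a c] by simp

lemma gmap_equiv:
  assumes l: "l \<in> cosets d m H" and p: "p \<in> topspace (hocolim d m K H)"
  shows "gmap (hocolim_act m l p) = Lact m l (gmap p)" "hocolim_act m l p \<in> topspace (hocolim d m K H)"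
proof -
  obtain a where a: "a \<in> Gm d m" "l = setmul m {a} H" using l by (auto simp: cosets_def)
  obtain \<sigma> t c where x: "\<sigma> \<in> chains K" "t \<in> simplex_on \<sigma>" "c \<in> Gm d m" "p = hpt \<sigma> t c"
    using p topspace_hocolim by blast
  have ac: "gmul m a c \<in> Gm d m" using gmul_Gm[OF a(1) x(3)] .
  have "gmap (hocolim_act m l p) = q (vec t (gmul m a c))"
    using act_hpt[OF x(1-3) a(1)] gmap_hpt[OF x(1,2) ac] a(2) x(4) by simp
  also have "\<dots> = Lact m l (gmap p)"
    using gmap_hpt[OF x(1-3)] x(4) a(2) orbit_act[OF H a(1) vec_ext] by (simp add: vec_gmul Lact_def)
  finally show "gmap (hocolim_act m l p) = Lact m l (gmap p)" .
  show "hocolim_act m l p \<in> topspace (hocolim d m K H)"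
    using act_hpt[OF x(1-3) a(1)] a(2) x(1,2,4) ac topspace_hocolim by auto
qed

lemma orbit_act_top:
  assumes l: "l \<in> cosets d m H" and y: "y \<in> topspace (orbit_space d m K H)"
  shows "Lact m l y \<in> topspace (orbit_space d m K H)"
proof -
  obtain a where a: "a \<in> Gm d m" "l = setmul m {a} H" using l by (auto simp: cosets_def)
  obtain x where x: "x \<in> P" "y = q x" using y by (auto simp: topspace_orbit)
  have "Lact m l y = q (gmul m a x)" using orbit_act[OF H a(1) P_ext[OF x(1)]] a(2) x(2) by (simp add: Lact_def)
  then show ?thesis using P_inv[OF a(1) x(1)] by (simp add: topspace_orbit)
qed

theorem main:
  "equivariant_homotopy_equivalent (cosets d m H)
           (orbit_space d m K H) (Lact m)
           (hocolim d m K H) (hocolim_act m)"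
proof -
  have hm: "homeomorphic_map (hocolim d m K H) (orbit_space d m K H) gmap"
    by (rule bijective_closed_imp_homeomorphic_map[OF cont_gmap
          continuous_imp_closed_map[OF cont_gmap compact_hocolim Hausdorff_orbit] gmap_surj gmap_inj])
  then obtain f where f: "homeomorphic_maps (hocolim d m K H) (orbit_space d m K H) gmap f"
    using homeomorphic_map_maps by blast
  have cf: "continuous_map (orbit_space d m K H) (hocolim d m K H) f"
    and cg: "continuous_map (hocolim d m K H) (orbit_space d m K H) gmap"
    and fg: "\<And>p. p \<in> topspace (hocolim d m K H) \<Longrightarrow> f (gmap p) = p"
    and gf: "\<And>y. y \<in> topspace (orbit_space d m K H) \<Longrightarrow> gmap (f y) = y"
    using f by (auto simp: homeomorphic_maps_def)
  have f_top: "y \<in> topspace (orbit_space d m K H) \<Longrightarrow> f y \<in> topspace (hocolim d m K H)" for y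
    using cf by (auto simp: continuous_map_def)
  let ?L = "cosets d m H"
  have eqg: "equivariant ?L (hocolim_act m) (Lact m) (hocolim d m K H) gmap"
    unfolding equivariant_def using gmap_equiv(1) by blast
  have eqf: "equivariant ?L (Lact m) (hocolim_act m) (orbit_space d m K H) f"
    unfolding equivariant_def
  proof (intro ballI)
    fix l y assume l: "l \<in> ?L" and y: "y \<in> topspace (orbit_space d m K H)"
    have "gmap (f (Lact m l y)) = gmap (hocolim_act m l (f y))"
      using gf[OF orbit_act_top[OF l y]] gmap_equiv(1)[OF l f_top[OF y]] gf[OF y] by simp
    then show "f (Lact m l y) = hocolim_act m l (f y)"
      using gmap_inj f_top[OF orbit_act_top[OF l y]] gmap_equiv(2)[OF l f_top[OF y]]
      by (auto dest: inj_onD)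
  qed
  have h1: "homotopic_with (equivariant ?L (Lact m) (Lact m) (orbit_space d m K H))
      (orbit_space d m K H) (orbit_space d m K H) (gmap \<circ> f) id"
  proof (rule homotopic_with_equal)
    show "equivariant ?L (Lact m) (Lact m) (orbit_space d m K H) (gmap \<circ> f)"
      unfolding equivariant_def using gf orbit_act_top by simp
    show "equivariant ?L (Lact m) (Lact m) (orbit_space d m K H) id"
      unfolding equivariant_def by simp
    show "continuous_map (orbit_space d m K H) (orbit_space d m K H) (gmap \<circ> f)"
      by (rule continuous_map_compose[OF cf cg])
  qed (simp add: gf)
  have h2: "homotopic_with (equivariant ?L (hocolim_act m) (hocolim_act m) (hocolim d m K H))
      (hocolim d m K H) (hocolim d m K H) (f \<circ> gmap) id"
  proof (rule homotopic_with_equal)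
    show "equivariant ?L (hocolim_act m) (hocolim_act m) (hocolim d m K H) (f \<circ> gmap)"
      unfolding equivariant_def using fg gmap_equiv(2) by simp
    show "equivariant ?L (hocolim_act m) (hocolim_act m) (hocolim d m K H) id"
      unfolding equivariant_def by simp
    show "continuous_map (hocolim d m K H) (hocolim d m K H) (f \<circ> gmap)"
      by (rule continuous_map_compose[OF cg cf])
  qed (simp add: fg)
  show ?thesis unfolding equivariant_homotopy_equivalent_def
    using cf cg eqf eqg h1 h2 by blast
qed

end

theorem theorem3p3:
  fixes d m :: nat and K :: "nat set set" and H :: "(nat \<Rightarrow> complex) set"
  assumes "d \<in> {1, 2}"
    and "simp_complex_on m K"
    and "closed_subgroup d m H"
  shows "equivariant_homotopy_equivalent (cosets d m H)
           (orbit_space d m K H) (Lact m)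
           (hocolim d m K H) (hocolim_act m)"
proof -
  interpret setting d m K H by unfold_locales (use assms in auto)
  show ?thesis by (rule main)
qed

end
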